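(* Let $\alpha>0$, let $0<p<\infty$, and let $f$ be an entire function. If \[ \int_{\mathbb{C}}|f(z)|^p|z|^2e^{-\alpha|z|^2}\,dA(z)<\infty, \] then \[ \lim_{r\to\infty}r^3M_p^p(r,f)\,e^{-\alpha r^2}=0 . \]
   Context: $dA$ is area measure and $M_p(r,f)=\left(\int_0^{2\pi}|f(re^{i\theta})|^p\,d\theta\right)^{1/p}$. *)

theory Defs
  imports "HOL-Complex_Analysis.Complex_Analysis"
begin

text \<open>Integral mean: Mpp p r f = M_p(r,f)^p = integral over [0,2pi] of |f(r e^{i theta})|^p.\<close>
definition Mpp :: "real \<Rightarrow> real \<Rightarrow> (complex \<Rightarrow> complex) \<Rightarrow> real" where
  "Mpp p r f = (LBINT t=0..2*pi. norm (f (of_real r * cis t)) powr p)"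

end

theory Submission
  imports Defs
begin


lemma measurable_Complex_pair[measurable]:
  "(\<lambda>(x,y). Complex x y) \<in> borel_measurable (lborel \<Otimes>\<^sub>M lborel)"
proof -
  have "(\<lambda>(x,y). Complex x y) = (\<lambda>p. complex_of_real (fst p) + \<i> * complex_of_real (snd p))"
    by (auto simp: complex_eq_iff)
  also have "\<dots> \<in> borel_measurable (lborel \<Otimes>\<^sub>M lborel)" by measurable
  finally show ?thesis .
qed

lemma lborel_complex_eq:
  "(lborel :: complex measure) = distr (lborel \<Otimes>\<^sub>M lborel) borel (\<lambda>(x,y). Complex x y)"
proof (rule lborel_eqI)
  fix l u :: complex
  assume le: "\<And>b. b \<in> Basis \<Longrightarrow> l \<bullet> b \<le> u \<bullet> b"
  have "(\<lambda>(x,y). Complex x y) -` box l u \<inter> space (lborel \<Otimes>\<^sub>M lborel) = {Re l<..<Re u} \<times> {Im l<..<Im u}"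
    by (auto simp: in_box_complex_iff space_pair_measure)
  moreover have "Re l \<le> Re u" "Im l \<le> Im u" using le[of 1] le[of \<i>] by (auto simp: Basis_complex_def)
  ultimately show "emeasure (distr (lborel \<Otimes>\<^sub>M lborel) borel (\<lambda>(x,y). Complex x y)) (box l u) = (\<Prod>b\<in>Basis. (u - l) \<bullet> b)"
    by (subst emeasure_distr) (auto simp: lborel.emeasure_pair_measure_Times Basis_complex_def ennreal_mult)
qed simp

lemma nn_integral_complex_fubini:
  assumes [measurable]: "H \<in> borel_measurable (borel :: complex measure)"
  shows "(\<integral>\<^sup>+ z. H z \<partial>lborel) = (\<integral>\<^sup>+ x. \<integral>\<^sup>+ y. H (Complex x y) \<partial>lborel \<partial>lborel)"
proof -
  have "(\<integral>\<^sup>+ z. H z \<partial>lborel) = (\<integral>\<^sup>+ z. H z \<partial>(distr (lborel \<Otimes>\<^sub>M lborel) borel (\<lambda>(x,y). Complex x y)))"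
    by (subst lborel_complex_eq[symmetric]) simp
  also have "\<dots> = (\<integral>\<^sup>+ xy. H (case xy of (x,y) \<Rightarrow> Complex x y) \<partial>(lborel \<Otimes>\<^sub>M lborel))"
    by (subst nn_integral_distr) auto
  also have "\<dots> = (\<integral>\<^sup>+ x. \<integral>\<^sup>+ y. H (Complex x y) \<partial>lborel \<partial>lborel)"
    by (subst lborel.nn_integral_fst[symmetric]) auto
  finally show ?thesis .
qed



lemma linepath_nn_bound:
  fixes G :: "complex \<Rightarrow> complex"
  assumes contG: "continuous_on UNIV G" and s: "s > 0"
    and far: "\<And>w. w \<in> closed_segment a b \<Longrightarrow> cmod (w - z) \<ge> s"
  shows "ennreal (cmod (contour_integral (linepath a b) (\<lambda>w. G w / (w - z))))
     \<le> ennreal (cmod (b-a) / s) * (\<integral>\<^sup>+x. ennreal (indicator {0..1} x * cmod (G (linepath a b x))) \<partial>lborel)"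
proof -
  define f where "f = (\<lambda>w. G w / (w - z))"
  have zn: "z \<notin> closed_segment a b" using far s by force
  have cf: "continuous_on (closed_segment a b) f"
    unfolding f_def using zn
    by (intro continuous_intros continuous_on_subset[OF contG]) auto
  have "f contour_integrable_on linepath a b"
    by (rule contour_integrable_continuous_linepath[OF cf])
  hence hi: "((\<lambda>x. f (linepath a b x) * (b-a)) has_integral contour_integral (linepath a b) f) {0..1}"
    using has_contour_integral_integral has_contour_integral_linepath by blast
  have cl: "continuous_on {0..1} (\<lambda>x. cmod (G (linepath a b x)))"
    by (intro continuous_intros continuous_on_compose2[OF contG]) (auto intro: continuous_intros)
  have inseg: "x \<in> {0..1} \<Longrightarrow> linepath a b x \<in> closed_segment a b" for x
    by (metis imageI path_image_def path_image_linepath)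
  have ci: "contour_integral (linepath a b) f = integral {0..1} (\<lambda>x. f (linepath a b x) * (b - a))"
    using integral_unique[OF hi] by metis
  have "cmod (integral {0..1} (\<lambda>x. f (linepath a b x) * (b - a))) \<le> integral {0..1} (\<lambda>x. cmod (G (linepath a b x)) * (cmod (b-a) / s))"
  proof (rule integral_norm_bound_integral)
    show "(\<lambda>x. f (linepath a b x) * (b - a)) integrable_on {0..1}" using hi by blast
    show "(\<lambda>x. cmod (G (linepath a b x)) * (cmod (b - a) / s)) integrable_on {0..1}"
      by (intro integrable_continuous_interval continuous_intros cl)
    fix x :: real assume x: "x \<in> {0..1}"
    have d: "cmod (linepath a b x - z) \<ge> s" using far[OF inseg[OF x]] .
    have "cmod (f (linepath a b x) * (b - a)) = cmod (G (linepath a b x)) * cmod (b-a) / cmod (linepath a b x - z)"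
      by (simp add: f_def norm_mult norm_divide)
    also have "\<dots> \<le> cmod (G (linepath a b x)) * cmod (b-a) / s"
      using d s by (intro divide_left_mono) (auto intro!: mult_pos_pos)
    finally show "cmod (f (linepath a b x) * (b - a)) \<le> cmod (G (linepath a b x)) * (cmod (b - a) / s)" by simp
  qed
  hence "cmod (contour_integral (linepath a b) f) \<le> integral {0..1} (\<lambda>x. cmod (G (linepath a b x)) * (cmod (b-a) / s))"
    using ci by simp
  also have "\<dots> = (cmod (b-a) / s) * integral {0..1} (\<lambda>x. cmod (G (linepath a b x)))"
    by (simp add: mult.commute)
  finally have le: "cmod (contour_integral (linepath a b) f) \<le> (cmod (b-a) / s) * integral {0..1} (\<lambda>x. cmod (G (linepath a b x)))" .
  have "((\<lambda>x. cmod (G (linepath a b x))) has_integral integral {0..1} (\<lambda>x. cmod (G (linepath a b x)))) {0..1}"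
    using integrable_continuous_interval[OF cl] by blast
  hence eq: "(\<integral>\<^sup>+x. ennreal (indicator {0..1} x * cmod (G (linepath a b x))) \<partial>lborel) = ennreal (integral {0..1} (\<lambda>x. cmod (G (linepath a b x))))"
    by (subst nn_integral_has_integral_lebesgue) auto
  show ?thesis unfolding eq f_def[symmetric]
    using le s integrable_continuous_interval[OF cl]
    by (subst ennreal_mult[symmetric]) (auto intro!: ennreal_leI integral_nonneg)
qed



lemma affine_subst01:
  fixes h :: "real \<Rightarrow> real" and c t :: real
  assumes [measurable]: "h \<in> borel_measurable borel" and c: "c \<noteq> 0"
    and I: "\<And>x. indicator {0..1} x = (indicator I (t + c*x) :: real)" and [measurable]: "I \<in> sets borel"
  shows "(\<integral>\<^sup>+x. ennreal (indicator {0..1} x * h (t + c*x)) \<partial>lborel)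
        = ennreal (1/\<bar>c\<bar>) * (\<integral>\<^sup>+X. ennreal (indicator I X * h X) \<partial>lborel)"
proof -
  have "(\<integral>\<^sup>+X. ennreal (indicator I X * h X) \<partial>lborel) = \<bar>c\<bar> * (\<integral>\<^sup>+x. ennreal (indicator I (t + c*x) * h (t + c*x)) \<partial>lborel)"
    by (rule nn_integral_real_affine[OF _ c]) measurable
  also have "\<dots> = \<bar>c\<bar> * (\<integral>\<^sup>+x. ennreal (indicator {0..1} x * h (t + c*x)) \<partial>lborel)"
    by (simp add: I)
  finally have e: "(\<integral>\<^sup>+X. ennreal (indicator I X * h X) \<partial>lborel) = ennreal \<bar>c\<bar> * (\<integral>\<^sup>+x. ennreal (indicator {0..1} x * h (t + c*x)) \<partial>lborel)" by simp
  have "ennreal (1/\<bar>c\<bar>) * ennreal \<bar>c\<bar> = 1" using c by (simp add: ennreal_mult[symmetric])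
  thus ?thesis unfolding e by (simp add: mult.assoc[symmetric])
qed

lemma sqrt4sq: "0 < s \<Longrightarrow> sqrt (4 * s\<^sup>2) = 2 * s"
proof -
  assume "0 < s"
  have "4 * s\<^sup>2 = (2 * s)\<^sup>2" by (simp add: power2_eq_square)
  hence "sqrt (4 * s\<^sup>2) = sqrt ((2 * s)\<^sup>2)" by (simp only:)
  also have "\<dots> = \<bar>2 * s\<bar>" by (rule real_sqrt_abs)
  finally show ?thesis using \<open>0 < s\<close> by simp
qed

lemma rect_bound:
  fixes G :: "complex \<Rightarrow> complex"
  assumes hol: "G holomorphic_on UNIV" and s: "s > 0"
  shows "ennreal (2*pi*cmod (G z)) \<le> ennreal (1/s) *
     ((\<integral>\<^sup>+X. ennreal (indicator {-s..s} X * cmod (G (z + Complex X (-s)))) \<partial>lborel)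
    + (\<integral>\<^sup>+X. ennreal (indicator {-s..s} X * cmod (G (z + Complex s X))) \<partial>lborel)
    + (\<integral>\<^sup>+X. ennreal (indicator {-s..s} X * cmod (G (z + Complex X s))) \<partial>lborel)
    + (\<integral>\<^sup>+X. ennreal (indicator {-s..s} X * cmod (G (z + Complex (-s) X))) \<partial>lborel))"
proof -
  define a1 where "a1 = z + Complex (-s) (-s)"
  define a2 where "a2 = z + Complex s (-s)"
  define a3 where "a3 = z + Complex s s"
  define a4 where "a4 = z + Complex (-s) s"
  define f where "f = (\<lambda>w. G w / (w - z))"
  have contG: "continuous_on UNIV G" using hol holomorphic_on_imp_continuous_on by blast
  have rp: "rectpath a1 a3 = linepath a1 a2 +++ linepath a2 a3 +++ linepath a3 a4 +++ linepath a4 a1"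
  proof -
    have "Complex (Re a3) (Im a1) = a2" "Complex (Re a1) (Im a3) = a4"
      by (simp_all add: a1_def a2_def a3_def a4_def complex_eq_iff)
    thus ?thesis by (simp add: rectpath_def Let_def)
  qed
  have zbox: "z \<in> box a1 a3" using s by (auto simp: in_box_complex_iff a1_def a3_def)
  have le13: "Re a1 \<le> Re a3" "Im a1 \<le> Im a3" using s by (auto simp: a1_def a3_def)
  have "(f has_contour_integral (2*pi * \<i> * winding_number (rectpath a1 a3) z * G z)) (rectpath a1 a3)"
    unfolding f_def
  proof (rule Cauchy_integral_formula_convex_simple[where S=UNIV])
    show "path_image (rectpath a1 a3) \<subseteq> UNIV - {z}"
      using path_image_rectpath_inter_box[OF le13] zbox by auto
  qed (use hol in auto)
  hence hc: "(f has_contour_integral (2*pi * \<i> * G z)) (rectpath a1 a3)"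
    using winding_number_rectpath[OF zbox] by simp
  have seg: "\<And>w u. w \<in> closed_segment u v \<Longrightarrow> P u \<Longrightarrow> P v \<Longrightarrow> (\<And>x y. P x \<Longrightarrow> P y \<Longrightarrow> \<forall>t\<in>{0..1}. P ((1-t)*\<^sub>R x + t *\<^sub>R y)) \<Longrightarrow> P w" for P and v :: complex
    by (auto simp: closed_segment_def)
  have far1: "cmod (w - z) \<ge> s" if wseg: "w \<in> closed_segment a1 a2" for w
  proof -
    obtain u where "w = (1 - u) *\<^sub>R a1 + u *\<^sub>R a2" using wseg unfolding closed_segment_def by blast
    hence "Im w = (1-u) * Im a1 + u * Im a2" by simp
    also have "\<dots> = Im z - s" by (simp add: a1_def a2_def algebra_simps)
    finally have "Im w = Im z - s" .
    thus ?thesis using abs_Im_le_cmod[of "w - z"] s by auto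
  qed
  have far2: "cmod (w - z) \<ge> s" if wseg: "w \<in> closed_segment a2 a3" for w
  proof -
    obtain u where "w = (1 - u) *\<^sub>R a2 + u *\<^sub>R a3" using wseg unfolding closed_segment_def by blast
    hence "Re w = (1-u) * Re a2 + u * Re a3" by simp
    also have "\<dots> = Re z + s" by (simp add: a2_def a3_def algebra_simps)
    finally have "Re w = Re z + s" .
    thus ?thesis using abs_Re_le_cmod[of "w - z"] s by auto
  qed
  have far3: "cmod (w - z) \<ge> s" if wseg: "w \<in> closed_segment a3 a4" for w
  proof -
    obtain u where "w = (1 - u) *\<^sub>R a3 + u *\<^sub>R a4" using wseg unfolding closed_segment_def by blast
    hence "Im w = (1-u) * Im a3 + u * Im a4" by simp
    also have "\<dots> = Im z + s" by (simp add: a3_def a4_def algebra_simps)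
    finally have "Im w = Im z + s" .
    thus ?thesis using abs_Im_le_cmod[of "w - z"] s by auto
  qed
  have far4: "cmod (w - z) \<ge> s" if wseg: "w \<in> closed_segment a4 a1" for w
  proof -
    obtain u where "w = (1 - u) *\<^sub>R a4 + u *\<^sub>R a1" using wseg unfolding closed_segment_def by blast
    hence "Re w = (1-u) * Re a4 + u * Re a1" by simp
    also have "\<dots> = Re z - s" by (simp add: a4_def a1_def algebra_simps)
    finally have "Re w = Re z - s" .
    thus ?thesis using abs_Re_le_cmod[of "w - z"] s by auto
  qed
  have ci: "f contour_integrable_on linepath u v" if "\<And>w. w \<in> closed_segment u v \<Longrightarrow> cmod (w - z) \<ge> s" for u v
  proof -
    have "z \<notin> closed_segment u v" using that s by force
    hence "continuous_on (closed_segment u v) f" unfolding f_def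
      by (intro continuous_intros continuous_on_subset[OF contG]) auto
    thus ?thesis by (rule contour_integrable_continuous_linepath)
  qed
  have c1: "f contour_integrable_on linepath a1 a2" by (rule ci[OF far1])
  have c2: "f contour_integrable_on linepath a2 a3" by (rule ci[OF far2])
  have c3: "f contour_integrable_on linepath a3 a4" by (rule ci[OF far3])
  have c4: "f contour_integrable_on linepath a4 a1" by (rule ci[OF far4])
  have "2*pi * \<i> * G z = contour_integral (rectpath a1 a3) f"
    using hc by (simp add: contour_integral_unique)
  also have "\<dots> = contour_integral (linepath a1 a2) f + contour_integral (linepath a2 a3) f
      + contour_integral (linepath a3 a4) f + contour_integral (linepath a4 a1) f"
    unfolding rp using c1 c2 c3 c4
    by (simp add: contour_integrable_joinI valid_path_join)
  finally have eq: "2*pi * \<i> * G z = \<dots>" .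
  have "2*pi*cmod (G z) = cmod (2*pi * \<i> * G z)" by (simp add: norm_mult)
  also have "\<dots> \<le> cmod (contour_integral (linepath a1 a2) f) + cmod (contour_integral (linepath a2 a3) f)
      + cmod (contour_integral (linepath a3 a4) f) + cmod (contour_integral (linepath a4 a1) f)"
    unfolding eq by (intro order_trans[OF norm_triangle_ineq] add_mono order_refl)
  finally have "ennreal (2*pi*cmod (G z)) \<le> ennreal (cmod (contour_integral (linepath a1 a2) f)) + ennreal (cmod (contour_integral (linepath a2 a3) f))
      + ennreal (cmod (contour_integral (linepath a3 a4) f)) + ennreal (cmod (contour_integral (linepath a4 a1) f))"
    by (simp add: ennreal_plus[symmetric] del: ennreal_plus)
  also have "\<dots> \<le> ennreal (1/s) * (\<integral>\<^sup>+X. ennreal (indicator {-s..s} X * cmod (G (z + Complex X (-s)))) \<partial>lborel)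
    + ennreal (1/s) * (\<integral>\<^sup>+X. ennreal (indicator {-s..s} X * cmod (G (z + Complex s X))) \<partial>lborel)
    + ennreal (1/s) * (\<integral>\<^sup>+X. ennreal (indicator {-s..s} X * cmod (G (z + Complex X s))) \<partial>lborel)
    + ennreal (1/s) * (\<integral>\<^sup>+X. ennreal (indicator {-s..s} X * cmod (G (z + Complex (-s) X))) \<partial>lborel)"
  proof -
    have gen: "ennreal (cmod (contour_integral (linepath u v) f)) \<le> ennreal (1/s) * (\<integral>\<^sup>+X. ennreal (indicator {-s..s} X * cmod (G (k X))) \<partial>lborel)"
      if far: "\<And>w. w \<in> closed_segment u v \<Longrightarrow> cmod (w - z) \<ge> s" and len: "cmod (v - u) = 2 * s"
        and lp: "\<And>x. linepath u v x = k (t + c*x)" and cc: "\<bar>c\<bar> = 2 * s"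
        and ind: "\<And>x. indicator {0..1} x = (indicator {-s..s} (t+c*x) :: real)"
        and ck: "continuous_on UNIV k" for u v k t c
    proof -
      have "ennreal (cmod (contour_integral (linepath u v) f)) \<le> ennreal (cmod (v-u) / s) * (\<integral>\<^sup>+x. ennreal (indicator {0..1} x * cmod (G (linepath u v x))) \<partial>lborel)"
        unfolding f_def by (rule linepath_nn_bound[OF contG s far])
      also have "(\<integral>\<^sup>+x. ennreal (indicator {0..1} x * cmod (G (linepath u v x))) \<partial>lborel)
          = (\<integral>\<^sup>+x. ennreal (indicator {0..1} x * (\<lambda>X. cmod (G (k X))) (t + c*x)) \<partial>lborel)"
        by (simp add: lp)
      also have "\<dots> = ennreal (1/\<bar>c\<bar>) * (\<integral>\<^sup>+X. ennreal (indicator {-s..s} X * cmod (G (k X))) \<partial>lborel)"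
      proof (rule affine_subst01)
        have "continuous_on UNIV (\<lambda>X. cmod (G (k X)))"
          by (intro continuous_intros continuous_on_compose2[OF contG ck]) auto
        thus "(\<lambda>X. cmod (G (k X))) \<in> borel_measurable borel" by (rule borel_measurable_continuous_onI)
      qed (use cc s ind in auto)
      finally have "ennreal (cmod (contour_integral (linepath u v) f)) \<le> ennreal (cmod (v-u) / s) * (ennreal (1/\<bar>c\<bar>) * (\<integral>\<^sup>+X. ennreal (indicator {-s..s} X * cmod (G (k X))) \<partial>lborel))" .
      also have "\<dots> = (ennreal (cmod (v-u) / s) * ennreal (1/\<bar>c\<bar>)) * (\<integral>\<^sup>+X. ennreal (indicator {-s..s} X * cmod (G (k X))) \<partial>lborel)"
        by (simp add: mult.assoc)
      also have "ennreal (cmod (v-u) / s) * ennreal (1/\<bar>c\<bar>) = ennreal (1/s)"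
      proof -
        have "ennreal (cmod (v-u) / s) * ennreal (1/\<bar>c\<bar>) = ennreal (cmod (v-u) / s * (1/\<bar>c\<bar>))"
          by (rule ennreal_mult[symmetric]) (use s in auto)
        also have "\<dots> = ennreal (1/s)" using s by (simp add: len cc)
        finally show ?thesis .
      qed
      finally show ?thesis .
    qed
    have ind1: "\<And>x. indicator {0..1} x = (indicator {-s..s} (-s + 2 * s*x) :: real)"
      using s by (auto simp: indicator_def mult_le_cancel_left1 zero_le_mult_iff)
    have ind2: "\<And>x. indicator {0..1} x = (indicator {-s..s} (s + (-2 * s)*x) :: real)"
      using s by (auto simp: indicator_def mult_le_cancel_left1 zero_le_mult_iff)
    have k1: "continuous_on UNIV (\<lambda>X. z + Complex X (-s))"
      unfolding Complex_eq by (intro continuous_intros)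
    have k2: "continuous_on UNIV (\<lambda>X. z + Complex s X)"
      unfolding Complex_eq by (intro continuous_intros)
    have k3: "continuous_on UNIV (\<lambda>X. z + Complex X s)"
      unfolding Complex_eq by (intro continuous_intros)
    have k4: "continuous_on UNIV (\<lambda>X. z + Complex (-s) X)"
      unfolding Complex_eq by (intro continuous_intros)
    have l1: "linepath a1 a2 x = z + Complex (-s + 2 * s*x) (-s)" for x
      by (simp add: linepath_def a1_def a2_def complex_eq_iff algebra_simps)
    have l2: "linepath a2 a3 x = z + Complex s (-s + 2 * s*x)" for x
      by (simp add: linepath_def a2_def a3_def complex_eq_iff algebra_simps)
    have l3: "linepath a3 a4 x = z + Complex (s + (-2 * s)*x) s" for x
      by (simp add: linepath_def a3_def a4_def complex_eq_iff algebra_simps)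
    have l4: "linepath a4 a1 x = z + Complex (-s) (s + (-2 * s)*x)" for x
      by (simp add: linepath_def a4_def a1_def complex_eq_iff algebra_simps)
    have len1: "cmod (a2 - a1) = 2 * s"
    proof -
      have "a2 - a1 = Complex (2 * s) 0" by (simp add: complex_eq_iff a1_def a2_def)
      thus ?thesis using s by (simp add: cmod_def sqrt4sq)
    qed
    have len2: "cmod (a3 - a2) = 2 * s"
    proof -
      have "a3 - a2 = Complex 0 (2 * s)" by (simp add: complex_eq_iff a3_def a2_def)
      thus ?thesis using s by (simp add: cmod_def sqrt4sq)
    qed
    have len3: "cmod (a4 - a3) = 2 * s"
    proof -
      have "a4 - a3 = Complex (-2 * s) 0" by (simp add: complex_eq_iff a3_def a4_def)
      thus ?thesis using s by (simp add: cmod_def sqrt4sq)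
    qed
    have len4: "cmod (a1 - a4) = 2 * s"
    proof -
      have "a1 - a4 = Complex 0 (-2 * s)" by (simp add: complex_eq_iff a1_def a4_def)
      thus ?thesis using s by (simp add: cmod_def sqrt4sq)
    qed
    have cc1: "\<bar>2 * s\<bar> = 2 * s" "\<bar>-2 * s\<bar> = 2 * s" using s by auto
    show ?thesis
      apply (intro add_mono)
      apply (rule gen[OF far1 len1 l1 cc1(1) ind1 k1], assumption)
      apply (rule gen[OF far2 len2 l2 cc1(1) ind1 k2], assumption)
      apply (rule gen[OF far3 len3 l3 cc1(2) ind2 k3], assumption)
      apply (rule gen[OF far4 len4 l4 cc1(2) ind2 k4], assumption)
      done
  qed
  finally show ?thesis by (simp add: distrib_left)
qed



lemma measurable_Complex_comp[measurable (raw)]: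
  assumes "f \<in> borel_measurable M" "g \<in> borel_measurable M"
  shows "(\<lambda>x. Complex (f x) (g x)) \<in> borel_measurable M"
proof -
  have "(\<lambda>x. Complex (f x) (g x)) = (\<lambda>x. complex_of_real (f x) + \<i> * complex_of_real (g x))"
    by (auto simp: complex_eq_iff)
  also have "\<dots> \<in> borel_measurable M" using assms by measurable
  finally show ?thesis .
qed

lemma square_mean:
  fixes G :: "complex \<Rightarrow> complex"
  assumes hol: "G holomorphic_on UNIV" and d: "d > 0"
  shows "ennreal (cmod (G z)) \<le> ennreal (8 / (pi * d\<^sup>2)) *
     (\<integral>\<^sup>+x. \<integral>\<^sup>+y. ennreal (indicator {-d..d} x * indicator {-d..d} y * cmod (G (z + Complex x y))) \<partial>lborel \<partial>lborel)"
proof -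
  have contG: "continuous_on UNIV G" using hol holomorphic_on_imp_continuous_on by blast
  have Gm[measurable]: "G \<in> borel_measurable borel" using contG by (rule borel_measurable_continuous_onI)
  define K where "K = (\<lambda>x y. cmod (G (z + Complex x y)))"
  have Km[measurable (raw)]: "(\<lambda>x. K (f x) (g x)) \<in> borel_measurable M"
    if [measurable]: "f \<in> borel_measurable M" "g \<in> borel_measurable M" for f g and M :: "'b measure"
    unfolding K_def by measurable
  define SQ where "SQ = (\<integral>\<^sup>+x. \<integral>\<^sup>+y. ennreal (indicator {-d..d} x * indicator {-d..d} y * K x y) \<partial>lborel \<partial>lborel)"
  define Bt where "Bt = (\<lambda>s. \<integral>\<^sup>+X. ennreal (indicator {-d..d} X * K X (-s)) \<partial>lborel)"
  define Rt where "Rt = (\<lambda>s. \<integral>\<^sup>+X. ennreal (indicator {-d..d} X * K s X) \<partial>lborel)"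
  define Tt where "Tt = (\<lambda>s. \<integral>\<^sup>+X. ennreal (indicator {-d..d} X * K X s) \<partial>lborel)"
  define Lt where "Lt = (\<lambda>s. \<integral>\<^sup>+X. ennreal (indicator {-d..d} X * K (-s) X) \<partial>lborel)"
  have Btm[measurable]: "Bt \<in> borel_measurable lborel" unfolding Bt_def by measurable
  have Btm'[measurable]: "Bt \<in> borel_measurable borel" unfolding Bt_def by measurable
  have Rtm[measurable]: "Rt \<in> borel_measurable lborel" unfolding Rt_def by measurable
  have Rtm'[measurable]: "Rt \<in> borel_measurable borel" unfolding Rt_def by measurable
  have Ttm[measurable]: "Tt \<in> borel_measurable lborel" unfolding Tt_def by measurable
  have Ttm'[measurable]: "Tt \<in> borel_measurable borel" unfolding Tt_def by measurable
  have Ltm[measurable]: "Lt \<in> borel_measurable lborel" unfolding Lt_def by measurable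
  have Ltm'[measurable]: "Lt \<in> borel_measurable borel" unfolding Lt_def by measurable
  define I where "I = (\<lambda>s. indicator {d/2..d} s :: ennreal)"
  define J where "J = (\<lambda>s. indicator {-d..d} s :: ennreal)"
  have IJ: "I s \<le> J s" for s unfolding I_def J_def using d by (auto simp: indicator_def)
  have IJ': "I (-s) \<le> J s" for s unfolding I_def J_def using d by (auto simp: indicator_def)
  have Im[measurable]: "I \<in> borel_measurable lborel" unfolding I_def by measurable
  have Im'[measurable]: "I \<in> borel_measurable borel" unfolding I_def by measurable
  have Jm[measurable]: "J \<in> borel_measurable lborel" unfolding J_def by measurable
  have pt: "ennreal (2*pi*cmod (G z)) \<le> ennreal (2/d) * (Bt s + Rt s + Tt s + Lt s)" if s: "s \<in> {d/2..d}" for s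
  proof -
    have s0: "s > 0" using s d by auto
    have sub: "(\<integral>\<^sup>+X. ennreal (indicator {-s..s} X * F X) \<partial>lborel) \<le> (\<integral>\<^sup>+X. ennreal (indicator {-d..d} X * F X) \<partial>lborel)"
      if "\<And>X. F X \<ge> 0" for F :: "real \<Rightarrow> real"
      using s that by (intro nn_integral_mono ennreal_leI) (auto simp: indicator_def)
    have "ennreal (2*pi*cmod (G z)) \<le> ennreal (1/s) *
     ((\<integral>\<^sup>+X. ennreal (indicator {-s..s} X * cmod (G (z + Complex X (-s)))) \<partial>lborel)
    + (\<integral>\<^sup>+X. ennreal (indicator {-s..s} X * cmod (G (z + Complex s X))) \<partial>lborel)
    + (\<integral>\<^sup>+X. ennreal (indicator {-s..s} X * cmod (G (z + Complex X s))) \<partial>lborel)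
    + (\<integral>\<^sup>+X. ennreal (indicator {-s..s} X * cmod (G (z + Complex (-s) X))) \<partial>lborel))"
      by (rule rect_bound[OF hol s0])
    also have "\<dots> \<le> ennreal (2/d) * (Bt s + Rt s + Tt s + Lt s)"
      unfolding Bt_def Rt_def Tt_def Lt_def K_def
      using s d by (intro mult_mono add_mono sub ennreal_leI) (auto simp: field_simps)
    finally show ?thesis .
  qed
  have "ennreal (2*pi*cmod (G z)) * ennreal (d/2) = (\<integral>\<^sup>+s. ennreal (2*pi*cmod (G z)) * I s \<partial>lborel)"
    unfolding I_def using d by (subst nn_integral_cmult_indicator) auto
  also have "\<dots> \<le> (\<integral>\<^sup>+s. ennreal (2/d) * (I s * Bt s + I s * Rt s + I s * Tt s + I s * Lt s) \<partial>lborel)"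
  proof (rule nn_integral_mono)
    fix s :: real
    show "ennreal (2*pi*cmod (G z)) * I s \<le> ennreal (2/d) * (I s * Bt s + I s * Rt s + I s * Tt s + I s * Lt s)"
    proof (cases "s \<in> {d/2..d}")
      case True
      hence "I s = 1" unfolding I_def by simp
      thus ?thesis using pt[OF True] by simp
    next
      case False
      hence "I s = 0" unfolding I_def by simp
      thus ?thesis by simp
    qed
  qed
  also have "\<dots> = ennreal (2/d) * ((\<integral>\<^sup>+s. I s * Bt s \<partial>lborel) + (\<integral>\<^sup>+s. I s * Rt s \<partial>lborel)
       + (\<integral>\<^sup>+s. I s * Tt s \<partial>lborel) + (\<integral>\<^sup>+s. I s * Lt s \<partial>lborel))"
  proof -
    have a1: "(\<integral>\<^sup>+s. A s + B s \<partial>lborel) = (\<integral>\<^sup>+s. A s \<partial>lborel) + (\<integral>\<^sup>+s. B s \<partial>lborel)"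
      if "A \<in> borel_measurable lborel" "B \<in> borel_measurable lborel" for A B :: "real \<Rightarrow> ennreal"
      by (rule nn_integral_add) (use that in auto)
    have "(\<integral>\<^sup>+s. ennreal (2/d) * (I s * Bt s + I s * Rt s + I s * Tt s + I s * Lt s) \<partial>lborel)
        = ennreal (2/d) * (\<integral>\<^sup>+s. (I s * Bt s + I s * Rt s + I s * Tt s + I s * Lt s) \<partial>lborel)"
      by (rule nn_integral_cmult) measurable
    also have "(\<integral>\<^sup>+s. (I s * Bt s + I s * Rt s + I s * Tt s + I s * Lt s) \<partial>lborel)
       = (\<integral>\<^sup>+s. (I s * Bt s + I s * Rt s + I s * Tt s) \<partial>lborel) + (\<integral>\<^sup>+s. I s * Lt s \<partial>lborel)"
      by (rule a1) measurable
    also have "(\<integral>\<^sup>+s. (I s * Bt s + I s * Rt s + I s * Tt s) \<partial>lborel)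
       = (\<integral>\<^sup>+s. (I s * Bt s + I s * Rt s) \<partial>lborel) + (\<integral>\<^sup>+s. I s * Tt s \<partial>lborel)"
      by (rule a1) measurable
    also have "(\<integral>\<^sup>+s. (I s * Bt s + I s * Rt s) \<partial>lborel)
       = (\<integral>\<^sup>+s. I s * Bt s \<partial>lborel) + (\<integral>\<^sup>+s. I s * Rt s \<partial>lborel)"
      by (rule a1) measurable
    finally show ?thesis .
  qed
  finally have main: "ennreal (2*pi*cmod (G z)) * ennreal (d/2) \<le> ennreal (2/d) * ((\<integral>\<^sup>+s. I s * Bt s \<partial>lborel) + (\<integral>\<^sup>+s. I s * Rt s \<partial>lborel)
       + (\<integral>\<^sup>+s. I s * Tt s \<partial>lborel) + (\<integral>\<^sup>+s. I s * Lt s \<partial>lborel))" .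
  have JR: "(\<integral>\<^sup>+s. J s * Rt s \<partial>lborel) = SQ"
  proof -
    have "J s * Rt s = (\<integral>\<^sup>+X. ennreal (indicator {-d..d} s * indicator {-d..d} X * K s X) \<partial>lborel)" for s
      unfolding Rt_def J_def
      by (subst nn_integral_cmult[symmetric]) (auto simp: indicator_mult_ennreal mult.assoc)
    thus ?thesis unfolding SQ_def by simp
  qed
  have JT: "(\<integral>\<^sup>+s. J s * Tt s \<partial>lborel) = SQ"
  proof -
    have "J s * Tt s = (\<integral>\<^sup>+X. ennreal (indicator {-d..d} X * indicator {-d..d} s * K X s) \<partial>lborel)" for s
      unfolding Tt_def J_def
      by (subst nn_integral_cmult[symmetric]) (auto simp: indicator_mult_ennreal mult.assoc mult.left_commute)
    hence "(\<integral>\<^sup>+s. J s * Tt s \<partial>lborel) = (\<integral>\<^sup>+s. \<integral>\<^sup>+X. ennreal (indicator {-d..d} X * indicator {-d..d} s * K X s) \<partial>lborel \<partial>lborel)"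
      by simp
    also have "\<dots> = SQ" unfolding SQ_def
      by (rule lborel_pair.Fubini[where f = "\<lambda>(X,s). ennreal (indicator {-d..d} X * indicator {-d..d} s * K X s)", simplified]) measurable
    finally show ?thesis .
  qed
  have iR: "(\<integral>\<^sup>+s. I s * Rt s \<partial>lborel) \<le> SQ"
    unfolding JR[symmetric] by (intro nn_integral_mono mult_right_mono IJ) auto
  have iT: "(\<integral>\<^sup>+s. I s * Tt s \<partial>lborel) \<le> SQ"
    unfolding JT[symmetric] by (intro nn_integral_mono mult_right_mono IJ) auto
  have mB: "(\<lambda>x. I x * Bt x) \<in> borel_measurable borel" by measurable
  have mL: "(\<lambda>x. I x * Lt x) \<in> borel_measurable borel" by measurable
  have iB: "(\<integral>\<^sup>+s. I s * Bt s \<partial>lborel) \<le> SQ"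
  proof -
    have "(\<integral>\<^sup>+s. I s * Bt s \<partial>lborel) = ennreal \<bar>-1\<bar> * (\<integral>\<^sup>+s. I (0 + -1 * s) * Bt (0 + -1 * s) \<partial>lborel)"
      by (rule nn_integral_real_affine) (fact mB, simp)
    also have "\<dots> = (\<integral>\<^sup>+s. I (-s) * Tt s \<partial>lborel)" unfolding Bt_def Tt_def by simp
    also have "\<dots> \<le> (\<integral>\<^sup>+s. J s * Tt s \<partial>lborel)" by (intro nn_integral_mono mult_right_mono IJ') auto
    finally show ?thesis using JT by simp
  qed
  have iL: "(\<integral>\<^sup>+s. I s * Lt s \<partial>lborel) \<le> SQ"
  proof -
    have "(\<integral>\<^sup>+s. I s * Lt s \<partial>lborel) = ennreal \<bar>-1\<bar> * (\<integral>\<^sup>+s. I (0 + -1 * s) * Lt (0 + -1 * s) \<partial>lborel)"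
      by (rule nn_integral_real_affine) (fact mL, simp)
    also have "\<dots> = (\<integral>\<^sup>+s. I (-s) * Rt s \<partial>lborel)" unfolding Lt_def Rt_def by simp
    also have "\<dots> \<le> (\<integral>\<^sup>+s. J s * Rt s \<partial>lborel)" by (intro nn_integral_mono mult_right_mono IJ') auto
    finally show ?thesis using JR by simp
  qed
  have fin: "ennreal (2*pi*cmod (G z)) * ennreal (d/2) \<le> ennreal (2/d) * (4 * SQ)"
  proof -
    have "(4::ennreal) = 1+1+1+1" by simp
    hence "SQ + SQ + SQ + SQ = 4 * SQ" by (simp only: distrib_right mult_1_left)
    moreover have "(\<integral>\<^sup>+s. I s * Bt s \<partial>lborel) + (\<integral>\<^sup>+s. I s * Rt s \<partial>lborel)
       + (\<integral>\<^sup>+s. I s * Tt s \<partial>lborel) + (\<integral>\<^sup>+s. I s * Lt s \<partial>lborel) \<le> SQ + SQ + SQ + SQ"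
      by (intro add_mono iB iR iT iL)
    ultimately have "ennreal (2/d) * ((\<integral>\<^sup>+s. I s * Bt s \<partial>lborel) + (\<integral>\<^sup>+s. I s * Rt s \<partial>lborel)
       + (\<integral>\<^sup>+s. I s * Tt s \<partial>lborel) + (\<integral>\<^sup>+s. I s * Lt s \<partial>lborel)) \<le> ennreal (2/d) * (4 * SQ)"
      by (intro mult_left_mono) auto
    with main show ?thesis by (rule order_trans)
  qed
  have SQ_eq: "(\<integral>\<^sup>+x. \<integral>\<^sup>+y. ennreal (indicator {-d..d} x * indicator {-d..d} y * cmod (G (z + Complex x y))) \<partial>lborel \<partial>lborel) = SQ"
    unfolding SQ_def K_def ..
  have "ennreal (cmod (G z)) \<le> ennreal (8 / (pi * d\<^sup>2)) * SQ"
  proof (cases SQ rule: ennreal_cases)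
    case (real q)
    have "ennreal (2*pi*cmod (G z)) * ennreal (d/2) = ennreal (2*pi*cmod (G z) * (d/2))"
      using d by (simp add: ennreal_mult[symmetric])
    moreover have "ennreal (2/d) * (4 * SQ) = ennreal (2/d * (4 * q))"
    proof -
      have "ennreal (2/d) * (4 * SQ) = ennreal (2/d) * (ennreal 4 * ennreal q)" using real by simp
      also have "\<dots> = ennreal (2/d * (4 * q))" using d real by (simp add: ennreal_mult[symmetric] del: ennreal_numeral)
      finally show ?thesis .
    qed
    ultimately have "ennreal (2*pi*cmod (G z) * (d/2)) \<le> ennreal (2/d * (4 * q))" using fin by simp
    hence r: "2*pi*cmod (G z) * (d/2) \<le> 2/d * (4 * q)"
      using d real by (subst (asm) ennreal_le_iff) auto
    have "cmod (G z) \<le> 8 / (pi * d\<^sup>2) * q"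
    proof -
      have "cmod (G z) * (pi * d\<^sup>2) = 2*pi*cmod (G z) * (d/2) * d" by (simp add: power2_eq_square)
      also have "\<dots> \<le> 2/d * (4 * q) * d" using r d by (intro mult_right_mono) auto
      also have "\<dots> = 8 * q" using d by simp
      finally have "cmod (G z) * (pi * d\<^sup>2) \<le> 8 * q" .
      thus ?thesis using d by (simp add: field_simps)
    qed
    hence "ennreal (cmod (G z)) \<le> ennreal (8 / (pi * d\<^sup>2) * q)" by (rule ennreal_leI)
    also have "ennreal (8 / (pi * d\<^sup>2) * q) = ennreal (8 / (pi * d\<^sup>2)) * SQ"
      using real d by (simp add: ennreal_mult[symmetric])
    finally show ?thesis .
  next
    case top
    have "ennreal (8 / (pi * d\<^sup>2)) \<noteq> 0" using d by simp
    thus ?thesis unfolding top by (simp add: ennreal_mult_top)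
  qed
  thus ?thesis unfolding SQ_eq .
qed



lemma phi_trick:
  fixes M :: "real \<Rightarrow> real" and q C j B :: real
  assumes q: "0 < q" "q \<le> 1" and Mnn: "\<And>r. M r \<ge> 0"
    and Mb: "\<And>r. r \<in> {0..<1} \<Longrightarrow> M r \<le> B"
    and C: "C \<ge> 0" and j: "j \<ge> 0"
    and step: "\<And>r. r \<in> {0..<1} \<Longrightarrow> M r \<le> C / (1-r)\<^sup>2 * j * M ((1+r)/2) powr (1-q)"
  shows "M 0 powr q \<le> C * j * 2 powr (2/q*(1-q))"
proof -
  define e where "e = 2/q"
  have e: "e > 0" "e * q = 2" using q by (auto simp: e_def)
  define \<Phi> where "\<Phi> = Sup ((\<lambda>r. (1-r) powr e * M r) ` {0..<1})"
  have bdd: "bdd_above ((\<lambda>r. (1-r) powr e * M r) ` {0..<1})"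
  proof (rule bdd_aboveI2)
    fix r :: real assume r: "r \<in> {0..<1}"
    have "(1-r) powr e \<le> 1" using r e by (intro powr_le1) auto
    hence "(1-r) powr e * M r \<le> 1 * M r" using Mnn by (intro mult_right_mono) auto
    thus "(1-r) powr e * M r \<le> B" using Mb[OF r] by simp
  qed
  have le\<Phi>: "(1-r) powr e * M r \<le> \<Phi>" if "r \<in> {0..<1}" for r
    unfolding \<Phi>_def using bdd that by (intro cSUP_upper) auto
  have M0: "M 0 \<le> \<Phi>" using le\<Phi>[of 0] by simp
  have \<Phi>nn: "\<Phi> \<ge> 0" using M0 Mnn[of 0] by simp
  define D where "D = C * j * 2 powr (e*(1-q))"
  have D: "D \<ge> 0" using C j by (simp add: D_def)
  have key: "(1-r) powr e * M r \<le> D * \<Phi> powr (1-q)" if r: "r \<in> {0..<1}" for r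
  proof -
    define a where "a = 1 - r"
    have a: "0 < a" "a \<le> 1" using r by (auto simp: a_def)
    have s: "(1+r)/2 \<in> {0..<1}" using r by auto
    have "(a/2) powr e * M ((1+r)/2) \<le> \<Phi>"
      using le\<Phi>[OF s] by (simp add: a_def field_simps)
    hence Ms: "M ((1+r)/2) \<le> \<Phi> * (a/2) powr (-e)"
      using a by (simp add: powr_minus field_simps)
    have "M ((1+r)/2) powr (1-q) \<le> (\<Phi> * (a/2) powr (-e)) powr (1-q)"
      using Ms Mnn q by (intro powr_mono2) auto
    also have "\<dots> = \<Phi> powr (1-q) * (a/2) powr (-e*(1-q))"
      using \<Phi>nn a by (simp add: powr_mult powr_powr)
    finally have Ms': "M ((1+r)/2) powr (1-q) \<le> \<Phi> powr (1-q) * (a/2) powr (-e*(1-q))" .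
    have "a powr e * M r \<le> a powr e * (C / a\<^sup>2 * j * M ((1+r)/2) powr (1-q))"
      using step[OF r] a by (intro mult_left_mono) (auto simp: a_def)
    also have "\<dots> \<le> a powr e * (C / a\<^sup>2 * j * (\<Phi> powr (1-q) * (a/2) powr (-e*(1-q))))"
      using Ms' a C j by (intro mult_left_mono) auto
    also have "\<dots> = C * j * \<Phi> powr (1-q) * (a powr e / a\<^sup>2 * (a/2) powr (-e*(1-q)))"
      by (simp add: field_simps)
    also have "a powr e / a\<^sup>2 * (a/2) powr (-e*(1-q)) = 2 powr (e*(1-q))"
    proof -
      have "(a/2) powr (-e*(1-q)) = a powr (-e*(1-q)) * 2 powr (e*(1-q))"
      proof -
        define y where "y = e*(1-q)"
        have "(a/2) powr (-y) = a powr (-y) / 2 powr (-y)" using a by (simp add: powr_divide)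
        also have "\<dots> = a powr (-y) * 2 powr y" by (simp add: powr_minus divide_inverse)
        finally show ?thesis by (simp add: y_def)
      qed
      moreover have "a\<^sup>2 = a powr 2" using a by (simp add: powr_numeral)
      moreover have "a powr e * a powr (-e*(1-q)) = a powr 2"
        using e by (simp add: powr_add[symmetric] algebra_simps)
      ultimately show ?thesis using a by (simp add: field_simps)
    qed
    finally show ?thesis by (simp add: a_def D_def mult_ac)
  qed
  have "\<Phi> \<le> D * \<Phi> powr (1-q)"
    unfolding \<Phi>_def[of] by (rule cSUP_least) (use key in \<open>auto simp: \<Phi>_def\<close>)
  hence PD: "\<Phi> \<le> D * \<Phi> powr (1-q)" .
  have "M 0 powr q \<le> D"
  proof (cases "\<Phi> = 0")
    case True
    hence "M 0 = 0" using M0 Mnn[of 0] by simp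
    thus ?thesis using D by simp
  next
    case False
    hence \<Phi>p: "\<Phi> > 0" using \<Phi>nn by simp
    have "\<Phi> powr q * \<Phi> powr (1-q) = \<Phi>" using \<Phi>p by (simp add: powr_add[symmetric])
    hence "\<Phi> powr q * \<Phi> powr (1-q) \<le> D * \<Phi> powr (1-q)" using PD by simp
    hence "\<Phi> powr q \<le> D" using \<Phi>p by (simp add: mult_le_cancel_right)
    moreover have "M 0 powr q \<le> \<Phi> powr q" using M0 Mnn[of 0] q by (intro powr_mono2) auto
    ultimately show ?thesis by simp
  qed
  thus ?thesis by (simp add: D_def e_def)
qed



definition sqr :: "complex \<Rightarrow> real \<Rightarrow> complex set" where
  "sqr z d = cbox (z - Complex d d) (z + Complex d d)"

lemma mem_sqr: "w \<in> sqr z d \<longleftrightarrow> \<bar>Re (w - z)\<bar> \<le> d \<and> \<bar>Im (w - z)\<bar> \<le> d"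
  by (auto simp: sqr_def in_cbox_complex_iff)

lemma compact_sqr: "compact (sqr z d)"
  by (simp add: sqr_def compact_cbox)

lemma sqr_borel[measurable]: "sqr z d \<in> sets borel"
  by (simp add: sqr_def)

lemma nn_integral_sqr:
  fixes H :: "complex \<Rightarrow> ennreal"
  assumes [measurable]: "H \<in> borel_measurable borel"
  shows "(\<integral>\<^sup>+ w. indicator (sqr z d) w * H w \<partial>lborel)
     = (\<integral>\<^sup>+x. \<integral>\<^sup>+y. ennreal (indicator {-d..d} x * indicator {-d..d} y) * H (z + Complex x y) \<partial>lborel \<partial>lborel)"
proof -
  have "(\<integral>\<^sup>+ w. indicator (sqr z d) w * H w \<partial>lborel) = (\<integral>\<^sup>+ w. indicator (sqr z d) w * H w \<partial>(distr lborel borel ((+) z)))"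
    by (simp add: lborel_distr_plus)
  also have "\<dots> = (\<integral>\<^sup>+ w. indicator (sqr z d) (z + w) * H (z + w) \<partial>lborel)"
    by (subst nn_integral_distr) auto
  also have "\<dots> = (\<integral>\<^sup>+x. \<integral>\<^sup>+y. indicator (sqr z d) (z + Complex x y) * H (z + Complex x y) \<partial>lborel \<partial>lborel)"
    by (rule nn_integral_complex_fubini) measurable
  also have "\<dots> = (\<integral>\<^sup>+x. \<integral>\<^sup>+y. ennreal (indicator {-d..d} x * indicator {-d..d} y) * H (z + Complex x y) \<partial>lborel \<partial>lborel)"
    by (intro nn_integral_cong) (auto simp: mem_sqr indicator_def)
  finally show ?thesis .
qed

lemma square_mean':
  fixes G :: "complex \<Rightarrow> complex"
  assumes hol: "G holomorphic_on UNIV" and d: "d > 0"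
  shows "ennreal (cmod (G z)) \<le> ennreal (8 / (pi * d\<^sup>2)) * (\<integral>\<^sup>+ w. indicator (sqr z d) w * ennreal (cmod (G w)) \<partial>lborel)"
proof -
  have contG: "continuous_on UNIV G" using hol holomorphic_on_imp_continuous_on by blast
  have Gm[measurable]: "G \<in> borel_measurable borel" using contG by (rule borel_measurable_continuous_onI)
  have "(\<integral>\<^sup>+ w. indicator (sqr z d) w * ennreal (cmod (G w)) \<partial>lborel) =
     (\<integral>\<^sup>+x. \<integral>\<^sup>+y. ennreal (indicator {-d..d} x * indicator {-d..d} y * cmod (G (z + Complex x y))) \<partial>lborel \<partial>lborel)"
    by (subst nn_integral_sqr) (measurable, simp add: ennreal_mult')
  thus ?thesis using square_mean[OF hol d, of z] by simp
qed



lemma submean_q: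
  fixes G :: "complex \<Rightarrow> complex" and q :: real
  assumes hol: "G holomorphic_on UNIV" and q: "0 < q" "q \<le> 1"
  shows "ennreal (cmod (G z0) powr q) \<le> ennreal (32/pi * 2 powr (2/q*(1-q))) *
     (\<integral>\<^sup>+ w. indicator (sqr z0 1) w * ennreal (cmod (G w) powr q) \<partial>lborel)"
proof -
  have contG: "continuous_on UNIV G" using hol holomorphic_on_imp_continuous_on by blast
  have Gm[measurable]: "G \<in> borel_measurable borel" using contG by (rule borel_measurable_continuous_onI)
  define J where "J = (\<integral>\<^sup>+ w. indicator (sqr z0 1) w * ennreal (cmod (G w) powr q) \<partial>lborel)"
  define Cq where "Cq = 32/pi * 2 powr (2/q*(1-q))"
  have Cq: "Cq > 0" unfolding Cq_def by simp
  have "ennreal (cmod (G z0) powr q) \<le> ennreal Cq * J"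
  proof (cases J rule: ennreal_cases)
    case top
    thus ?thesis using Cq by (simp add: ennreal_mult_top)
  next
    case (real j)
    define M where "M = (\<lambda>r. Sup (insert 0 ((\<lambda>w. cmod (G w)) ` sqr z0 r)))"
    have bdd: "bdd_above (insert 0 ((\<lambda>w. cmod (G w)) ` sqr z0 r))" for r
    proof -
      have "compact ((\<lambda>w. cmod (G w)) ` sqr z0 r)"
      proof (rule compact_continuous_image[OF _ compact_sqr])
        show "continuous_on (sqr z0 r) (\<lambda>w. cmod (G w))"
          by (intro continuous_intros continuous_on_subset[OF contG]) auto
      qed
      hence "bounded ((\<lambda>w. cmod (G w)) ` sqr z0 r)" by (rule compact_imp_bounded)
      thus ?thesis by (auto intro: bounded_imp_bdd_above)
    qed
    have Mnn: "M r \<ge> 0" for r unfolding M_def using bdd by (intro cSup_upper) auto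
    have Mup: "cmod (G w) \<le> M r" if "w \<in> sqr z0 r" for w r unfolding M_def using bdd that by (intro cSup_upper) auto
    have Mle: "M r \<le> B" if "B \<ge> 0" "\<And>w. w \<in> sqr z0 r \<Longrightarrow> cmod (G w) \<le> B" for r B
      unfolding M_def using that by (intro cSup_least) auto
    have Mb: "M r \<le> M 1" if "r \<in> {0..<1}" for r
      using that by (intro Mle Mnn Mup) (auto simp: mem_sqr)
    have step: "M r \<le> 32/pi / (1-r)\<^sup>2 * j * M ((1+r)/2) powr (1-q)" if r: "r \<in> {0..<1}" for r
    proof (rule Mle)
      show "0 \<le> 32/pi / (1-r)\<^sup>2 * j * M ((1+r)/2) powr (1-q)" using real by simp
      fix w assume w: "w \<in> sqr z0 r"
      define d where "d = (1-r)/2"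
      have d: "d > 0" using r by (simp add: d_def)
      define Ms where "Ms = M ((1+r)/2)"
      have pw: "indicator (sqr w d) v * ennreal (cmod (G v)) \<le> ennreal (Ms powr (1-q)) * (indicator (sqr z0 1) v * ennreal (cmod (G v) powr q))" for v
      proof (cases "v \<in> sqr w d")
        case False thus ?thesis by simp
      next
        case True
        have vs: "v \<in> sqr z0 ((1+r)/2)" "v \<in> sqr z0 1"
          using True w r unfolding mem_sqr d_def by (auto simp: abs_le_iff) (auto simp: abs_le_iff abs_if split: if_splits)
        have "cmod (G v) \<le> cmod (G v) powr q * Ms powr (1-q)"
        proof (cases "G v = 0")
          case True thus ?thesis by simp
        next
          case False
          hence "cmod (G v) = cmod (G v) powr q * cmod (G v) powr (1-q)" by (simp add: powr_add[symmetric])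
          also have "\<dots> \<le> cmod (G v) powr q * Ms powr (1-q)"
            using Mup[OF vs(1)] q by (intro mult_left_mono powr_mono2) (auto simp: Ms_def)
          finally show ?thesis .
        qed
        thus ?thesis using True vs by (simp add: ennreal_mult[symmetric] mult.commute)
      qed
      have "ennreal (cmod (G w)) \<le> ennreal (8 / (pi * d\<^sup>2)) * (\<integral>\<^sup>+ v. indicator (sqr w d) v * ennreal (cmod (G v)) \<partial>lborel)"
        by (rule square_mean'[OF hol d])
      also have "(\<integral>\<^sup>+ v. indicator (sqr w d) v * ennreal (cmod (G v)) \<partial>lborel) \<le> (\<integral>\<^sup>+ v. ennreal (Ms powr (1-q)) * (indicator (sqr z0 1) v * ennreal (cmod (G v) powr q)) \<partial>lborel)"
        by (intro nn_integral_mono pw)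
      also have "\<dots> = ennreal (Ms powr (1-q)) * J"
        unfolding J_def by (rule nn_integral_cmult) measurable
      finally have "ennreal (cmod (G w)) \<le> ennreal (8 / (pi * d\<^sup>2)) * (ennreal (Ms powr (1-q)) * J)"
        by (simp add: mult_left_mono)
      also have "\<dots> = ennreal (8 / (pi * d\<^sup>2) * (Ms powr (1-q) * j))"
        using real by (simp add: ennreal_mult[symmetric])
      finally have "cmod (G w) \<le> 8 / (pi * d\<^sup>2) * (Ms powr (1-q) * j)"
        using real by (subst (asm) ennreal_le_iff) auto
      also have "8 / (pi * d\<^sup>2) = 32/pi / (1-r)\<^sup>2" by (simp add: d_def power_divide)
      finally show "cmod (G w) \<le> 32/pi / (1-r)\<^sup>2 * j * M ((1+r)/2) powr (1-q)" by (simp add: Ms_def mult_ac)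
    qed
    have "M 0 powr q \<le> 32/pi * j * 2 powr (2/q*(1-q))"
      by (rule phi_trick[OF q Mnn Mb _ _ step]) (use real in auto)
    moreover have "cmod (G z0) powr q \<le> M 0 powr q" using Mup[of z0 0] q by (intro powr_mono2) (auto simp: mem_sqr)
    ultimately have "cmod (G z0) powr q \<le> Cq * j" by (simp add: Cq_def mult_ac)
    hence "ennreal (cmod (G z0) powr q) \<le> ennreal (Cq * j)" by (rule ennreal_leI)
    thus ?thesis using real Cq by (simp add: ennreal_mult)
  qed
  thus ?thesis unfolding J_def Cq_def .
qed



lemma sin_ge_half:
  assumes "0 \<le> a" "a \<le> pi/3"
  shows "a/2 \<le> sin a"
proof -
  have "(\<lambda>x. sin x - x/2) 0 \<le> (\<lambda>x. sin x - x/2) a"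
  proof (rule DERIV_nonneg_imp_increasing_open[OF assms(1)])
    fix x assume x: "0 < x" "x < a"
    have "cos (pi/3) \<le> cos x" using x assms by (intro cos_monotone_0_pi_le) auto
    hence "cos x - 1/2 \<ge> 0" using cos_60 by simp
    moreover have "((\<lambda>x. sin x - x/2) has_real_derivative (cos x - 1/2)) (at x)"
      by (auto intro!: derivative_eq_intros)
    ultimately show "\<exists>y. ((\<lambda>x. sin x - x/2) has_real_derivative y) (at x) \<and> 0 \<le> y" by blast
  qed (intro continuous_intros, simp)
  thus ?thesis by simp
qed

lemma small_angle:
  fixes y R :: real
  assumes y: "\<bar>y\<bar> \<le> pi" and R: "R \<ge> 4" and c: "1 - cos y \<le> 2 / R\<^sup>2"
  shows "\<bar>y\<bar> \<le> 4 / R"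
proof -
  define a where "a = \<bar>y\<bar>"
  have ca: "cos a = cos y" by (simp add: a_def abs_if)
  have a: "0 \<le> a" "a \<le> pi" using y by (auto simp: a_def)
  have R2: "2 / R\<^sup>2 \<le> 1/8"
  proof -
    have "(4::real)\<^sup>2 \<le> R\<^sup>2" using R by (intro power_mono) auto
    hence "R\<^sup>2 \<ge> 16" by simp
    hence "R\<^sup>2 > 0" using R by simp
    with \<open>R\<^sup>2 \<ge> 16\<close> show ?thesis by (simp add: divide_le_eq)
  qed
  have cge: "cos a \<ge> 7/8" using c R2 ca by simp
  have api: "a \<le> pi/3"
  proof (rule ccontr)
    assume "\<not> a \<le> pi/3"
    hence "cos a \<le> cos (pi/3)" using a by (intro cos_monotone_0_pi_le) auto
    thus False using cge cos_60 by simp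
  qed
  have s0: "sin a \<ge> 0" using a by (intro sin_ge_zero) auto
  have "(sin a)\<^sup>2 = 1 - (cos a)\<^sup>2" by (rule sin_squared_eq)
  also have "\<dots> = (1 - cos a) * (1 + cos a)" by (simp add: power2_eq_square algebra_simps)
  also have "\<dots> \<le> (2 / R\<^sup>2) * 2"
  proof (rule mult_mono)
    show "1 - cos a \<le> 2 / R\<^sup>2" using c ca by simp
    show "1 + cos a \<le> 2" by simp
    show "0 \<le> 2 / R\<^sup>2" by simp
    show "0 \<le> 1 + cos a" using cge by simp
  qed
  also have "\<dots> = (2 / R)\<^sup>2" by (simp add: power2_eq_square)
  finally have "(sin a)\<^sup>2 \<le> (2 / R)\<^sup>2" .
  hence "sin a \<le> 2 / R" by (rule power2_le_imp_le) (use R in simp)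
  moreover have "a/2 \<le> sin a" using sin_ge_half a api by blast
  ultimately have "a \<le> 4 / R" by linarith
  thus ?thesis by (simp add: a_def)
qed



lemma cmod_sq_bound: "w \<in> sqr c 1 \<Longrightarrow> (cmod (w - c))\<^sup>2 \<le> 2"
proof -
  assume "w \<in> sqr c 1"
  hence a: "\<bar>Re (w - c)\<bar> \<le> 1" "\<bar>Im (w - c)\<bar> \<le> 1" by (auto simp: mem_sqr)
  have sq1: "x\<^sup>2 \<le> 1" if "\<bar>x\<bar> \<le> 1" for x :: real
  proof -
    have "\<bar>x\<bar>\<^sup>2 \<le> 1\<^sup>2" using that by (intro power_mono) auto
    thus ?thesis by simp
  qed
  have "(Re (w - c))\<^sup>2 \<le> 1" "(Im (w - c))\<^sup>2 \<le> 1" using sq1 a by blast+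
  hence "(Re (w - c))\<^sup>2 + (Im (w - c))\<^sup>2 \<le> 2" by linarith
  thus ?thesis by (simp only: cmod_power2)
qed

lemma arc_bound:
  fixes R :: real and w :: complex
  assumes R: "R \<ge> 4"
  shows "emeasure lborel {t \<in> {0..2*pi}. w \<in> sqr (of_real R * cis t) 1} \<le> ennreal (16 / R)"
proof -
  define S where "S = {t \<in> {0..2*pi}. w \<in> sqr (of_real R * cis t) 1}"
  define m where "m = cmod w"
  define u where "u = Arg w"
  have wm: "w = of_real m * cis u" unfolding m_def u_def by (metis rcis_cmod_Arg rcis_def)
  define A where "A = {u - 4/R .. u + 4/R}"
  define B where "B = {u + 2*pi - 4/R .. u + 2*pi + 4/R}"
  have sub: "S \<subseteq> A \<union> B"
  proof
    fix t assume tS: "t \<in> S"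
    hence t: "0 \<le> t" "t \<le> 2*pi" and ws: "w \<in> sqr (of_real R * cis t) 1" by (auto simp: S_def)
    have d2: "(cmod (w - of_real R * cis t))\<^sup>2 \<le> 2" by (rule cmod_sq_bound[OF ws])
    have "cmod (w - of_real R * cis t) \<le> 2"
    proof -
      have "(cmod (w - of_real R * cis t))\<^sup>2 \<le> 2\<^sup>2" using d2 by simp
      thus ?thesis by (rule power2_le_imp_le) simp
    qed
    moreover have "R = cmod (of_real R * cis t)" using R by (simp add: norm_mult)
    moreover have "cmod (of_real R * cis t) \<le> cmod w + cmod (w - of_real R * cis t)"
      by (metis norm_triangle_sub add.commute norm_minus_commute)
    ultimately have mR: "m \<ge> R - 2" by (simp add: m_def)
    have expand: "(cmod (w - of_real R * cis t))\<^sup>2 = m\<^sup>2 + R\<^sup>2 - 2*m*R*cos (t - u)"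
    proof -
      have "(cmod (w - of_real R * cis t))\<^sup>2 = (m * cos u - R * cos t)\<^sup>2 + (m * sin u - R * sin t)\<^sup>2"
        unfolding wm cmod_power2 by simp
      also have "\<dots> = m\<^sup>2 * ((sin u)\<^sup>2 + (cos u)\<^sup>2) + R\<^sup>2 * ((sin t)\<^sup>2 + (cos t)\<^sup>2) - 2*m*R*(cos t * cos u + sin t * sin u)"
        by algebra
      also have "\<dots> = m\<^sup>2 * 1 + R\<^sup>2 * 1 - 2*m*R*(cos t * cos u + sin t * sin u)" by (simp only: sin_cos_squared_add)
      also have "\<dots> = m\<^sup>2 + R\<^sup>2 - 2*m*R*cos (t - u)" by (simp add: cos_diff)
      finally show ?thesis .
    qed
    have "2*m*R*(1 - cos (t - u)) \<le> 2"
    proof -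
      have "2*m*R*(1 - cos (t - u)) = (cmod (w - of_real R * cis t))\<^sup>2 - (m - R)\<^sup>2"
        unfolding expand by (simp add: power2_eq_square algebra_simps)
      thus ?thesis using d2 by (smt (verit) zero_le_power2)
    qed
    moreover have "m * R \<ge> R\<^sup>2 / 2"
    proof -
      have "m \<ge> R/2" using mR R by linarith
      hence "R/2 * R \<le> m * R" using R by (intro mult_right_mono) auto
      thus ?thesis by (simp add: power2_eq_square)
    qed
    ultimately have c: "1 - cos (t - u) \<le> 2 / R\<^sup>2"
    proof -
      assume h1: "2*m*R*(1 - cos (t - u)) \<le> 2" and h2: "m * R \<ge> R\<^sup>2 / 2"
      have c0: "1 - cos (t - u) \<ge> 0" by simp
      have "R\<^sup>2 / 2 * (1 - cos (t - u)) \<le> m * R * (1 - cos (t - u))" using h2 c0 by (rule mult_right_mono)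
      also have "\<dots> \<le> 1" using h1 by simp
      finally have "R\<^sup>2 * (1 - cos (t - u)) \<le> 2" by simp
      moreover have "R\<^sup>2 > 0" using R by simp
      ultimately show ?thesis by (simp add: field_simps)
    qed
    have ub: "-pi < u" "u \<le> pi" using Arg_bounded[of w] by (auto simp: u_def)
    show "t \<in> A \<union> B"
    proof (cases "t - u \<le> pi")
      case True
      have "\<bar>t - u\<bar> \<le> pi" using True t ub by auto
      hence "\<bar>t - u\<bar> \<le> 4 / R" using small_angle R c by blast
      thus ?thesis by (auto simp: A_def abs_le_iff)
    next
      case False
      have cc: "cos (t - u - 2*pi) = cos (t - u)" by (simp add: cos_diff)
      have "\<bar>t - u - 2*pi\<bar> \<le> pi" using False t ub by auto
      hence "\<bar>t - u - 2*pi\<bar> \<le> 4 / R" using small_angle R c cc by metis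
      thus ?thesis by (auto simp: B_def abs_le_iff)
    qed
  qed
  have "emeasure lborel S \<le> emeasure lborel (A \<union> B)" using sub by (intro emeasure_mono) (auto simp: A_def B_def)
  also have "\<dots> \<le> emeasure lborel A + emeasure lborel B" by (intro emeasure_subadditive) (auto simp: A_def B_def)
  also have "\<dots> = ennreal (8/R) + ennreal (8/R)" using R by (simp add: A_def B_def)
  also have "\<dots> = ennreal (16/R)" using R by (simp add: ennreal_plus[symmetric] del: ennreal_plus)
  finally show ?thesis unfolding S_def .
qed



definition Cp :: "real \<Rightarrow> real" where
  "Cp p = (let q = p / real (nat \<lceil>p\<rceil>) in 32/pi * 2 powr (2/q*(1-q)))"

lemma Cp_pos: "Cp p > 0" by (simp add: Cp_def Let_def)

lemma submean_p:
  fixes G :: "complex \<Rightarrow> complex" and p :: real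
  assumes hol: "G holomorphic_on UNIV" and p: "0 < p"
  shows "ennreal (cmod (G z0) powr p) \<le> ennreal (Cp p) *
     (\<integral>\<^sup>+ w. indicator (sqr z0 1) w * ennreal (cmod (G w) powr p) \<partial>lborel)"
proof -
  define n where "n = nat \<lceil>p\<rceil>"
  define q where "q = p / real n"
  have c0: "\<lceil>p\<rceil> > 0" using p by simp
  have n: "n \<ge> 1" "p \<le> real n"
  proof -
    have "\<lceil>p\<rceil> \<ge> 1" using c0 by linarith
    thus "n \<ge> 1" by (simp add: n_def le_nat_iff)
    have "real n = real_of_int \<lceil>p\<rceil>" using c0 by (simp add: n_def)
    thus "p \<le> real n" by simp
  qed
  have q: "0 < q" "q \<le> 1" using n p by (auto simp: q_def field_simps)
  have hol': "(\<lambda>w. G w ^ n) holomorphic_on UNIV" using hol by (intro holomorphic_intros)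
  have eq: "cmod (G w ^ n) powr q = cmod (G w) powr p" for w
  proof (cases "G w = 0")
    case True thus ?thesis using n by simp
  next
    case False
    have "cmod (G w ^ n) powr q = (cmod (G w) powr real n) powr q"
      using False by (simp add: norm_power powr_realpow)
    also have "\<dots> = cmod (G w) powr p" using n by (simp add: powr_powr q_def)
    finally show ?thesis .
  qed
  have "Cp p = 32/pi * 2 powr (2/q*(1-q))" by (simp only: Cp_def Let_def q_def n_def)
  thus ?thesis using submean_q[OF hol' q, of z0] by (simp add: eq)
qed

lemma norm_sq_expand: "(cmod w)\<^sup>2 = (cmod z)\<^sup>2 + 2 * Re (cnj z * (w - z)) + (cmod (w - z))\<^sup>2"
  unfolding cmod_power2 by (simp add: power2_eq_square algebra_simps)

lemma fock_point:
  fixes f :: "complex \<Rightarrow> complex" and p \<alpha> :: real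
  assumes hol: "f holomorphic_on UNIV" and p: "0 < p" and \<alpha>: "\<alpha> \<ge> 0"
  shows "ennreal (cmod (f z0) powr p * exp (-\<alpha> * (cmod z0)\<^sup>2)) \<le> ennreal (Cp p * exp (2*\<alpha>)) *
     (\<integral>\<^sup>+ w. indicator (sqr z0 1) w * ennreal (cmod (f w) powr p * exp (-\<alpha> * (cmod w)\<^sup>2)) \<partial>lborel)"
proof -
  define G where "G = (\<lambda>w. f w * exp (- of_real (2*\<alpha>/p) * cnj z0 * (w - z0)))"
  have holG: "G holomorphic_on UNIV" unfolding G_def using hol by (intro holomorphic_intros)
  have Gz0: "G z0 = f z0" by (simp add: G_def)
  have Gp: "cmod (G w) powr p = cmod (f w) powr p * exp (-2*\<alpha> * Re (cnj z0 * (w - z0)))" for w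
  proof -
    have re: "Re (- of_real (2*\<alpha>/p) * cnj z0 * (w - z0)) = -(2*\<alpha>/p) * Re (cnj z0 * (w - z0))"
      by (simp add: mult.assoc)
    have "cmod (G w) = cmod (f w) * exp (-(2*\<alpha>/p) * Re (cnj z0 * (w - z0)))"
      unfolding G_def norm_mult norm_exp_eq_Re re ..
    hence "cmod (G w) powr p = cmod (f w) powr p * exp (-(2*\<alpha>/p) * Re (cnj z0 * (w - z0))) powr p"
      by (simp add: powr_mult)
    also have "exp (-(2*\<alpha>/p) * Re (cnj z0 * (w - z0))) powr p = exp (-2*\<alpha> * Re (cnj z0 * (w - z0)))"
      using p by (simp add: powr_def)
    finally show ?thesis .
  qed
  have bound: "indicator (sqr z0 1) w * ennreal (cmod (G w) powr p) \<le>
      ennreal (exp (\<alpha> * (cmod z0)\<^sup>2) * exp (2*\<alpha>)) * (indicator (sqr z0 1) w * ennreal (cmod (f w) powr p * exp (-\<alpha> * (cmod w)\<^sup>2)))" for w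
  proof (cases "w \<in> sqr z0 1")
    case False thus ?thesis by simp
  next
    case True
    have d: "(cmod (w - z0))\<^sup>2 \<le> 2" by (rule cmod_sq_bound[OF True])
    have "exp (-2*\<alpha> * Re (cnj z0 * (w - z0))) = exp (-\<alpha> * (cmod w)\<^sup>2) * exp (\<alpha> * (cmod z0)\<^sup>2) * exp (\<alpha> * (cmod (w - z0))\<^sup>2)"
      unfolding norm_sq_expand[of w z0] by (simp add: exp_add[symmetric] algebra_simps)
    also have "\<dots> \<le> exp (-\<alpha> * (cmod w)\<^sup>2) * exp (\<alpha> * (cmod z0)\<^sup>2) * exp (2*\<alpha>)"
    proof -
      have "\<alpha> * (cmod (w - z0))\<^sup>2 \<le> \<alpha> * 2" using mult_left_mono[OF d \<alpha>] .
      thus ?thesis by (intro mult_left_mono) auto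
    qed
    finally have "cmod (G w) powr p \<le> cmod (f w) powr p * (exp (-\<alpha> * (cmod w)\<^sup>2) * exp (\<alpha> * (cmod z0)\<^sup>2) * exp (2*\<alpha>))"
      unfolding Gp by (intro mult_left_mono) auto
    hence "ennreal (cmod (G w) powr p) \<le> ennreal (exp (\<alpha> * (cmod z0)\<^sup>2) * exp (2*\<alpha>) * (cmod (f w) powr p * exp (-\<alpha> * (cmod w)\<^sup>2)))"
      by (intro ennreal_leI) (simp add: mult_ac)
    thus ?thesis using True by (simp add: ennreal_mult)
  qed
  have fm[measurable]: "f \<in> borel_measurable borel"
    using hol holomorphic_on_imp_continuous_on borel_measurable_continuous_onI by blast
  have "ennreal (cmod (f z0) powr p) \<le> ennreal (Cp p) * (\<integral>\<^sup>+ w. indicator (sqr z0 1) w * ennreal (cmod (G w) powr p) \<partial>lborel)"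
    using submean_p[OF holG p, of z0] by (simp add: Gz0)
  also have "\<dots> \<le> ennreal (Cp p) * (\<integral>\<^sup>+ w. ennreal (exp (\<alpha> * (cmod z0)\<^sup>2) * exp (2*\<alpha>)) * (indicator (sqr z0 1) w * ennreal (cmod (f w) powr p * exp (-\<alpha> * (cmod w)\<^sup>2))) \<partial>lborel)"
    by (intro mult_left_mono nn_integral_mono bound) auto
  also have "\<dots> = ennreal (Cp p) * (ennreal (exp (\<alpha> * (cmod z0)\<^sup>2) * exp (2*\<alpha>)) * (\<integral>\<^sup>+ w. indicator (sqr z0 1) w * ennreal (cmod (f w) powr p * exp (-\<alpha> * (cmod w)\<^sup>2)) \<partial>lborel))"
  proof -
    have [measurable]: "sqr z0 1 \<in> sets lborel" by simp
    have im: "(\<lambda>w. indicator (sqr z0 1) w * ennreal (cmod (f w) powr p * exp (-\<alpha> * (cmod w)\<^sup>2))) \<in> borel_measurable lborel"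
      by measurable
    show ?thesis by (subst nn_integral_cmult[OF im]) (rule refl)
  qed
  finally have main: "ennreal (cmod (f z0) powr p) \<le> ennreal (Cp p) * (ennreal (exp (\<alpha> * (cmod z0)\<^sup>2) * exp (2*\<alpha>)) * (\<integral>\<^sup>+ w. indicator (sqr z0 1) w * ennreal (cmod (f w) powr p * exp (-\<alpha> * (cmod w)\<^sup>2)) \<partial>lborel))" .
  define I where "I = (\<integral>\<^sup>+ w. indicator (sqr z0 1) w * ennreal (cmod (f w) powr p * exp (-\<alpha> * (cmod w)\<^sup>2)) \<partial>lborel)"
  have "ennreal (cmod (f z0) powr p * exp (-\<alpha> * (cmod z0)\<^sup>2)) = ennreal (exp (-\<alpha> * (cmod z0)\<^sup>2)) * ennreal (cmod (f z0) powr p)"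
    by (simp add: ennreal_mult mult.commute)
  also have "\<dots> \<le> ennreal (exp (-\<alpha> * (cmod z0)\<^sup>2)) * (ennreal (Cp p) * (ennreal (exp (\<alpha> * (cmod z0)\<^sup>2) * exp (2*\<alpha>)) * I))"
    using main unfolding I_def by (intro mult_left_mono) auto
  also have "\<dots> = ennreal (exp (-\<alpha> * (cmod z0)\<^sup>2) * Cp p * (exp (\<alpha> * (cmod z0)\<^sup>2) * exp (2*\<alpha>))) * I"
    using Cp_pos[of p] by (simp add: ennreal_mult mult_ac)
  also have "exp (-\<alpha> * (cmod z0)\<^sup>2) * Cp p * (exp (\<alpha> * (cmod z0)\<^sup>2) * exp (2*\<alpha>)) = Cp p * exp (2*\<alpha>)"
    by (simp add: exp_minus field_simps)
  finally show ?thesis unfolding I_def .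
qed



lemma cis_measurable[measurable (raw)]:
  "g \<in> borel_measurable M \<Longrightarrow> (\<lambda>x. cis (g x)) \<in> borel_measurable M"
proof -
  assume [measurable]: "g \<in> borel_measurable M"
  have "(\<lambda>x. cis (g x)) = (\<lambda>x. Complex (cos (g x)) (sin (g x)))" by (simp add: cis.code)
  also have "\<dots> \<in> borel_measurable M" by measurable
  finally show ?thesis .
qed

lemma indicator_sqr_eq: "indicator (sqr c 1) w = (indicator {(t, w). \<bar>Re (w - c)\<bar> \<le> 1 \<and> \<bar>Im (w - c)\<bar> \<le> 1} (t, w) :: ennreal)"
  by (simp add: indicator_def mem_sqr)

lemma circle_bound:
  fixes f :: "complex \<Rightarrow> complex" and p \<alpha> R :: real
  assumes hol: "f holomorphic_on UNIV" and p: "0 < p" and \<alpha>: "\<alpha> \<ge> 0" and R: "R \<ge> 4"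
  shows "(\<integral>\<^sup>+t. ennreal (indicator {0..2*pi} t * cmod (f (of_real R * cis t)) powr p) \<partial>lborel)
    \<le> ennreal (exp (\<alpha> * R\<^sup>2) * (Cp p * exp (2*\<alpha>)) * (64 / R^3)) *
      (\<integral>\<^sup>+w. indicator {w. R - 2 \<le> cmod w} w * ennreal (cmod (f w) powr p * (cmod w)\<^sup>2 * exp (-\<alpha> * (cmod w)\<^sup>2)) \<partial>lborel)"
proof -
  have fm[measurable]: "f \<in> borel_measurable borel"
    using hol holomorphic_on_imp_continuous_on borel_measurable_continuous_onI by blast
  define W where "W = (\<lambda>w. cmod (f w) powr p * exp (-\<alpha> * (cmod w)\<^sup>2))"
  have Wm[measurable]: "W \<in> borel_measurable borel" unfolding W_def by measurable
  define K where "K = ennreal (exp (\<alpha> * R\<^sup>2) * (Cp p * exp (2*\<alpha>)))"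
  define Q where "Q = (\<lambda>t w. indicator (sqr (of_real R * cis t) 1) w :: ennreal)"
  have Qm: "(\<lambda>(t, w). Q t w) \<in> borel_measurable (lborel \<Otimes>\<^sub>M lborel)"
  proof -
    have "(\<lambda>(t, w). Q t w) = (\<lambda>x. indicator {(t, w). \<bar>Re (w - of_real R * cis t)\<bar> \<le> 1 \<and> \<bar>Im (w - of_real R * cis t)\<bar> \<le> 1} x :: ennreal)"
      by (auto simp: Q_def indicator_def mem_sqr fun_eq_iff)
    also have "\<dots> \<in> borel_measurable (lborel \<Otimes>\<^sub>M lborel)" by measurable
    finally show ?thesis .
  qed
  have pt: "ennreal (cmod (f (of_real R * cis t)) powr p) \<le> K * (\<integral>\<^sup>+w. Q t w * ennreal (W w) \<partial>lborel)" for t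
  proof -
    define z0 where "z0 = of_real R * cis t"
    have nz: "cmod z0 = R" using R by (simp add: z0_def norm_mult)
    have fp: "ennreal (cmod (f z0) powr p * exp (-\<alpha> * (cmod z0)\<^sup>2)) \<le> ennreal (Cp p * exp (2*\<alpha>)) *
     (\<integral>\<^sup>+ w. indicator (sqr z0 1) w * ennreal (cmod (f w) powr p * exp (-\<alpha> * (cmod w)\<^sup>2)) \<partial>lborel)"
      by (rule fock_point[OF hol p \<alpha>])
    have eqQ: "(\<integral>\<^sup>+ w. indicator (sqr z0 1) w * ennreal (cmod (f w) powr p * exp (-\<alpha> * (cmod w)\<^sup>2)) \<partial>lborel)
       = (\<integral>\<^sup>+ w. Q t w * ennreal (W w) \<partial>lborel)" by (simp add: Q_def W_def z0_def)
    have "ennreal (cmod (f z0) powr p * exp (-\<alpha> * R\<^sup>2)) \<le> ennreal (Cp p * exp (2*\<alpha>)) * (\<integral>\<^sup>+ w. Q t w * ennreal (W w) \<partial>lborel)"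
      using fp unfolding nz eqQ .
    hence "ennreal (exp (\<alpha> * R\<^sup>2)) * ennreal (cmod (f z0) powr p * exp (-\<alpha> * R\<^sup>2)) \<le> ennreal (exp (\<alpha> * R\<^sup>2)) * (ennreal (Cp p * exp (2*\<alpha>)) *
     (\<integral>\<^sup>+ w. Q t w * ennreal (W w) \<partial>lborel))"
      by (intro mult_left_mono) auto
    moreover have "ennreal (exp (\<alpha> * R\<^sup>2)) * ennreal (cmod (f z0) powr p * exp (-\<alpha> * R\<^sup>2)) = ennreal (cmod (f z0) powr p)"
      by (simp add: ennreal_mult[symmetric] exp_minus field_simps)
    moreover have "K = ennreal (exp (\<alpha> * R\<^sup>2)) * ennreal (Cp p * exp (2*\<alpha>))"
      unfolding K_def using Cp_pos[of p] by (simp add: ennreal_mult)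
    ultimately show ?thesis unfolding z0_def by (simp add: mult.assoc)
  qed
  define V where "V = (\<lambda>w. cmod (f w) powr p * (cmod w)\<^sup>2 * exp (-\<alpha> * (cmod w)\<^sup>2))"
  define Ii where "Ii = (\<lambda>t. indicator {0..2*pi} t :: ennreal)"
  have Iim[measurable]: "Ii \<in> borel_measurable lborel" unfolding Ii_def by measurable
  have Fm: "(\<lambda>(t, w). Ii t * (Q t w * ennreal (W w))) \<in> borel_measurable (lborel \<Otimes>\<^sub>M lborel)"
    using Qm by measurable
  have "(\<integral>\<^sup>+t. ennreal (indicator {0..2*pi} t * cmod (f (of_real R * cis t)) powr p) \<partial>lborel)
      = (\<integral>\<^sup>+t. Ii t * ennreal (cmod (f (of_real R * cis t)) powr p) \<partial>lborel)"
    unfolding Ii_def by (simp add: indicator_mult_ennreal)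
  also have "\<dots> \<le> (\<integral>\<^sup>+t. Ii t * (K * (\<integral>\<^sup>+w. Q t w * ennreal (W w) \<partial>lborel)) \<partial>lborel)"
    by (intro nn_integral_mono mult_left_mono pt) auto
  also have "\<dots> = (\<integral>\<^sup>+t. K * (\<integral>\<^sup>+w. Ii t * (Q t w * ennreal (W w)) \<partial>lborel) \<partial>lborel)"
  proof (intro nn_integral_cong)
    fix t
    have mw: "(\<lambda>w. Q t w * ennreal (W w)) \<in> borel_measurable lborel"
      using measurable_Pair2[OF Qm, of t] by (simp add: Q_def) measurable
    show "Ii t * (K * (\<integral>\<^sup>+w. Q t w * ennreal (W w) \<partial>lborel)) = K * (\<integral>\<^sup>+w. Ii t * (Q t w * ennreal (W w)) \<partial>lborel)"
      by (subst nn_integral_cmult[OF mw]) (simp add: mult_ac)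
  qed
  also have "\<dots> = K * (\<integral>\<^sup>+t. \<integral>\<^sup>+w. Ii t * (Q t w * ennreal (W w)) \<partial>lborel \<partial>lborel)"
    by (rule nn_integral_cmult) (use Fm in measurable)
  finally have step1: "(\<integral>\<^sup>+t. ennreal (indicator {0..2*pi} t * cmod (f (of_real R * cis t)) powr p) \<partial>lborel)
     \<le> K * (\<integral>\<^sup>+t. \<integral>\<^sup>+w. Ii t * (Q t w * ennreal (W w)) \<partial>lborel \<partial>lborel)" .
  have fub: "(\<integral>\<^sup>+t. \<integral>\<^sup>+w. Ii t * (Q t w * ennreal (W w)) \<partial>lborel \<partial>lborel)
      = (\<integral>\<^sup>+w. \<integral>\<^sup>+t. Ii t * (Q t w * ennreal (W w)) \<partial>lborel \<partial>lborel)"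
    using lborel_pair.Fubini[OF Fm] by simp
  have inner: "(\<integral>\<^sup>+w. \<integral>\<^sup>+t. Ii t * (Q t w * ennreal (W w)) \<partial>lborel \<partial>lborel) \<le> (\<integral>\<^sup>+w. ennreal (64 / R^3) * (indicator {w. R - 2 \<le> cmod w} w * ennreal (V w)) \<partial>lborel)"
  proof (rule nn_integral_mono)
    fix w :: complex
    define S where "S = {t \<in> {0..2*pi}. w \<in> sqr (of_real R * cis t) 1}"
    have Sm: "S \<in> sets lborel"
    proof -
      have "S = {t \<in> space lborel. t \<in> {0..2*pi} \<and> \<bar>Re (w - of_real R * cis t)\<bar> \<le> 1 \<and> \<bar>Im (w - of_real R * cis t)\<bar> \<le> 1}"
        by (auto simp: S_def mem_sqr)
      also have "\<dots> \<in> sets lborel" by measurable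
      finally show ?thesis .
    qed
    have "(\<integral>\<^sup>+t. Ii t * (Q t w * ennreal (W w)) \<partial>lborel) = (\<integral>\<^sup>+t. ennreal (W w) * indicator S t \<partial>lborel)"
      by (intro nn_integral_cong) (auto simp: Ii_def Q_def S_def indicator_def)
    also have "\<dots> = ennreal (W w) * emeasure lborel S" using Sm by (rule nn_integral_cmult_indicator)
    also have "\<dots> \<le> ennreal (64 / R^3) * (indicator {w. R - 2 \<le> cmod w} w * ennreal (V w))"
    proof (cases "R - 2 \<le> cmod w")
      case False
      have "S = {}"
      proof (rule ccontr)
        assume "S \<noteq> {}"
        then obtain t where "w \<in> sqr (of_real R * cis t) 1" by (auto simp: S_def)
        hence d2: "(cmod (w - of_real R * cis t))\<^sup>2 \<le> 2\<^sup>2" using cmod_sq_bound by fastforce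
        have "cmod (w - of_real R * cis t) \<le> 2" using power2_le_imp_le[OF d2] by simp
        moreover have "cmod (of_real R * cis t) = R" using R by (simp add: norm_mult)
        moreover have "cmod (of_real R * cis t) \<le> cmod w + cmod (w - of_real R * cis t)"
          by (metis norm_triangle_sub add.commute norm_minus_commute)
        ultimately show False using False by simp
      qed
      thus ?thesis by simp
    next
      case True
      have "ennreal (W w) * emeasure lborel S \<le> ennreal (W w) * ennreal (16 / R)"
        unfolding S_def by (intro mult_left_mono arc_bound R) auto
      also have "\<dots> = ennreal (W w * (16 / R))" using R by (subst ennreal_mult) (auto simp: W_def)
      also have "W w * (16 / R) \<le> 64 / R^3 * V w"
      proof -
        have w2: "(cmod w)\<^sup>2 \<ge> R\<^sup>2 / 4"
        proof -
          have "R / 2 \<le> cmod w" using True R by linarith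
          hence "(R/2)\<^sup>2 \<le> (cmod w)\<^sup>2" using R by (intro power_mono) auto
          thus ?thesis by (simp add: power_divide)
        qed
        have W0: "W w \<ge> 0" by (simp add: W_def)
        have "W w * (16 / R) = 64 / R^3 * (W w * (R\<^sup>2 / 4))" using R by (simp add: field_simps power2_eq_square power3_eq_cube)
        also have "\<dots> \<le> 64 / R^3 * (W w * (cmod w)\<^sup>2)" using w2 W0 R by (intro mult_left_mono) auto
        also have "W w * (cmod w)\<^sup>2 = V w" by (simp add: W_def V_def mult_ac)
        finally show ?thesis .
      qed
      hence "ennreal (W w * (16 / R)) \<le> ennreal (64 / R^3 * V w)" by (rule ennreal_leI)
      also have "\<dots> = ennreal (64 / R^3) * (indicator {w. R - 2 \<le> cmod w} w * ennreal (V w))"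
        using True R by (subst ennreal_mult) (auto simp: V_def)
      finally show ?thesis .
    qed
    finally show "(\<integral>\<^sup>+t. Ii t * (Q t w * ennreal (W w)) \<partial>lborel) \<le> ennreal (64 / R^3) * (indicator {w. R - 2 \<le> cmod w} w * ennreal (V w))" .
  qed
  have cm: "(\<integral>\<^sup>+w. ennreal (64 / R^3) * (indicator {w. R - 2 \<le> cmod w} w * ennreal (V w)) \<partial>lborel)
     = ennreal (64 / R^3) * (\<integral>\<^sup>+w. indicator {w. R - 2 \<le> cmod w} w * ennreal (V w) \<partial>lborel)"
  proof (rule nn_integral_cmult)
    have [measurable]: "{w::complex. R - 2 \<le> cmod w} \<in> sets lborel" by measurable
    show "(\<lambda>w. indicator {w. R - 2 \<le> cmod w} w * ennreal (V w)) \<in> borel_measurable lborel"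
      unfolding V_def by measurable
  qed
  have "K * (\<integral>\<^sup>+t. \<integral>\<^sup>+w. Ii t * (Q t w * ennreal (W w)) \<partial>lborel \<partial>lborel) \<le> K * (ennreal (64 / R^3) * (\<integral>\<^sup>+w. indicator {w. R - 2 \<le> cmod w} w * ennreal (V w) \<partial>lborel))"
    using fub inner cm by (intro mult_left_mono) auto
  with step1 have "(\<integral>\<^sup>+t. ennreal (indicator {0..2*pi} t * cmod (f (of_real R * cis t)) powr p) \<partial>lborel)
     \<le> K * (ennreal (64 / R^3) * (\<integral>\<^sup>+w. indicator {w. R - 2 \<le> cmod w} w * ennreal (V w) \<partial>lborel))" by (rule order_trans)
  also have "K * (ennreal (64 / R^3) * (\<integral>\<^sup>+w. indicator {w. R - 2 \<le> cmod w} w * ennreal (V w) \<partial>lborel))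
     = ennreal (exp (\<alpha> * R\<^sup>2) * (Cp p * exp (2*\<alpha>)) * (64 / R^3)) * (\<integral>\<^sup>+w. indicator {w. R - 2 \<le> cmod w} w * ennreal (V w) \<partial>lborel)"
    unfolding K_def using R Cp_pos[of p] by (subst ennreal_mult[of _ "64 / R^3"]) (auto simp: mult.assoc)
  finally show ?thesis unfolding V_def .
qed



theorem theorem4p4:
  fixes f :: "complex \<Rightarrow> complex" and \<alpha> p :: real
  assumes "\<alpha> > 0" and "p > 0"
    and "f holomorphic_on UNIV"
    and "(\<integral>\<^sup>+ z. ennreal (norm (f z) powr p * norm z ^ 2 * exp (- \<alpha> * norm z ^ 2)) \<partial>lborel) < \<infinity>"
  shows "((\<lambda>r. r ^ 3 * Mpp p r f * exp (- \<alpha> * r ^ 2)) \<longlongrightarrow> 0) at_top"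
proof -
  note \<alpha> = assms(1) and p = assms(2) and hol = assms(3) and fin = assms(4)
  have fm[measurable]: "f \<in> borel_measurable borel"
    using hol holomorphic_on_imp_continuous_on borel_measurable_continuous_onI by blast
  define V where "V = (\<lambda>z. norm (f z) powr p * norm z ^ 2 * exp (- \<alpha> * norm z ^ 2))"
  have Vm[measurable]: "V \<in> borel_measurable borel" unfolding V_def by measurable
  have Vnn: "V z \<ge> 0" for z by (simp add: V_def)
  have Vfin: "(\<integral>\<^sup>+x. ennreal (V x) \<partial>lborel) < \<infinity>" using fin by (simp add: V_def)
  have Vint: "integrable lborel V"
    using Vfin by (intro integrableI_nonneg) (auto simp: Vnn)
  define Tr where "Tr = (\<lambda>s. integral\<^sup>L lborel (\<lambda>w. indicator {w. s \<le> cmod w} w * V w))"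
  have Tr_eq: "(\<integral>\<^sup>+w. indicator {w. s \<le> cmod w} w * ennreal (V w) \<partial>lborel) = ennreal (Tr s)" for s
  proof -
    have [measurable]: "{w::complex. s \<le> cmod w} \<in> sets borel" by measurable
    have int: "integrable lborel (\<lambda>w. indicator {w. s \<le> cmod w} w * V w)"
      using integrable_real_mult_indicator[OF _ Vint, of "{w. s \<le> cmod w}"] by (simp add: mult.commute)
    have "(\<integral>\<^sup>+w. indicator {w. s \<le> cmod w} w * ennreal (V w) \<partial>lborel) = (\<integral>\<^sup>+w. ennreal (indicator {w. s \<le> cmod w} w * V w) \<partial>lborel)"
      by (simp add: indicator_mult_ennreal)
    also have "\<dots> = ennreal (Tr s)" unfolding Tr_def
      by (rule nn_integral_eq_integral[OF int]) (auto simp: Vnn)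
    finally show ?thesis .
  qed
  have Trlim: "(Tr \<longlongrightarrow> 0) at_top"
  proof -
    define sq where "sq = (\<lambda>(t::real) (x::complex). indicator {w. t \<le> cmod w} x * V x)"
    have m1: "(\<lambda>w::complex. 0::real) \<in> borel_measurable lborel" by simp
    have m2: "sq t \<in> borel_measurable lborel" for t
    proof -
      have [measurable]: "{w::complex. t \<le> cmod w} \<in> sets borel" by measurable
      show ?thesis unfolding sq_def by measurable
    qed
    have ae: "AE x in lborel. ((\<lambda>i. sq i x) \<longlongrightarrow> 0) at_top"
    proof (rule AE_I2)
      fix x :: complex
      have "eventually (\<lambda>i. sq i x = 0) at_top"
        using eventually_gt_at_top[of "cmod x"] by eventually_elim (auto simp: indicator_def sq_def)
      thus "((\<lambda>i. sq i x) \<longlongrightarrow> 0) at_top"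
        by (rule tendsto_eventually)
    qed
    have bd: "\<forall>\<^sub>F i in at_top. AE x in lborel. norm (sq i x) \<le> V x"
      by (intro always_eventually allI AE_I2) (auto simp: indicator_def Vnn sq_def)
    have "((\<lambda>t. integral\<^sup>L lborel (sq t)) \<longlongrightarrow> integral\<^sup>L lborel (\<lambda>w::complex. 0::real)) at_top"
      by (rule integral_dominated_convergence_at_top[OF m1 m2 Vint ae bd])
    moreover have "(\<lambda>t. integral\<^sup>L lborel (sq t)) = Tr" by (simp add: sq_def Tr_def fun_eq_iff)
    ultimately show ?thesis by simp
  qed
  have Trnn: "Tr s \<ge> 0" for s unfolding Tr_def by (auto intro!: integral_nonneg simp: Vnn)
  define C where "C = 64 * (Cp p * exp (2*\<alpha>))"
  have bound: "r ^ 3 * Mpp p r f * exp (- \<alpha> * r ^ 2) \<le> C * Tr (r - 2)" if r: "r \<ge> 4" for r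
  proof -
    have "Mpp p r f = (LBINT t : {0..2*pi}. cmod (f (of_real r * cis t)) powr p)"
      unfolding Mpp_def using interval_integral_Icc[of 0 "2*pi" "\<lambda>t. cmod (f (of_real r * cis t)) powr p"]
      by (simp add: zero_ereal_def)
    also have "\<dots> = integral\<^sup>L lborel (\<lambda>t. indicator {0..2*pi} t * cmod (f (of_real r * cis t)) powr p)"
      by (simp add: set_lebesgue_integral_def)
    also have "\<dots> \<le> exp (\<alpha> * r\<^sup>2) * (Cp p * exp (2*\<alpha>)) * (64 / r^3) * Tr (r - 2)"
    proof (rule integral_real_bounded)
      show "0 \<le> exp (\<alpha> * r\<^sup>2) * (Cp p * exp (2*\<alpha>)) * (64 / r^3) * Tr (r - 2)"
        using Cp_pos[of p] r unfolding Tr_def by (auto intro!: integral_nonneg mult_nonneg_nonneg simp: Vnn)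
      have "(\<integral>\<^sup>+t. ennreal (indicator {0..2*pi} t * cmod (f (of_real r * cis t)) powr p) \<partial>lborel)
        \<le> ennreal (exp (\<alpha> * r\<^sup>2) * (Cp p * exp (2*\<alpha>)) * (64 / r^3)) *
          (\<integral>\<^sup>+w. indicator {w. r - 2 \<le> cmod w} w * ennreal (cmod (f w) powr p * (cmod w)\<^sup>2 * exp (-\<alpha> * (cmod w)\<^sup>2)) \<partial>lborel)"
        by (rule circle_bound[OF hol p _ r]) (use \<alpha> in simp)
      also have "(\<integral>\<^sup>+w. indicator {w. r - 2 \<le> cmod w} w * ennreal (cmod (f w) powr p * (cmod w)\<^sup>2 * exp (-\<alpha> * (cmod w)\<^sup>2)) \<partial>lborel) = ennreal (Tr (r - 2))"
        using Tr_eq[of "r - 2"] by (simp add: V_def)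
      also have "ennreal (exp (\<alpha> * r\<^sup>2) * (Cp p * exp (2*\<alpha>)) * (64 / r^3)) * ennreal (Tr (r - 2)) = ennreal (exp (\<alpha> * r\<^sup>2) * (Cp p * exp (2*\<alpha>)) * (64 / r^3) * Tr (r - 2))"
        using Cp_pos[of p] r Trnn[of "r - 2"] by (intro ennreal_mult[symmetric]) auto
      finally show "(\<integral>\<^sup>+t. ennreal (indicator {0..2*pi} t * cmod (f (of_real r * cis t)) powr p) \<partial>lborel) \<le> ennreal (exp (\<alpha> * r\<^sup>2) * (Cp p * exp (2*\<alpha>)) * (64 / r^3) * Tr (r - 2))" .
    qed
    finally have M: "Mpp p r f \<le> exp (\<alpha> * r\<^sup>2) * (Cp p * exp (2*\<alpha>)) * (64 / r^3) * Tr (r - 2)" .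
    have "r ^ 3 * Mpp p r f * exp (- \<alpha> * r ^ 2) \<le> r ^ 3 * (exp (\<alpha> * r\<^sup>2) * (Cp p * exp (2*\<alpha>)) * (64 / r^3) * Tr (r - 2)) * exp (- \<alpha> * r ^ 2)"
      using M r by (intro mult_right_mono mult_left_mono) auto
    also have "\<dots> = C * Tr (r - 2)" using r by (simp add: C_def exp_minus field_simps)
    finally show ?thesis .
  qed
  have nonneg: "0 \<le> r ^ 3 * Mpp p r f * exp (- \<alpha> * r ^ 2)" if r: "r \<ge> 4" for r
  proof -
    have "Mpp p r f = (LBINT t : {0..2*pi}. cmod (f (of_real r * cis t)) powr p)"
      unfolding Mpp_def using interval_integral_Icc[of 0 "2*pi" "\<lambda>t. cmod (f (of_real r * cis t)) powr p"]
      by (simp add: zero_ereal_def)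
    also have "\<dots> \<ge> 0" by (auto simp: set_lebesgue_integral_def intro!: integral_nonneg)
    finally show ?thesis using r by simp
  qed
  have lim2: "((\<lambda>r. C * Tr (r - 2)) \<longlongrightarrow> 0) at_top"
  proof -
    have "filterlim (\<lambda>r::real. r - 2) at_top at_top" by real_asymp
    hence "((\<lambda>r. Tr (r - 2)) \<longlongrightarrow> 0) at_top" using Trlim by (rule filterlim_compose[rotated])
    thus ?thesis using tendsto_mult_left[of _ 0 at_top C] by simp
  qed
  show ?thesis
  proof (rule tendsto_sandwich[OF _ _ tendsto_const lim2])
    show "\<forall>\<^sub>F r in at_top. 0 \<le> r ^ 3 * Mpp p r f * exp (- \<alpha> * r ^ 2)"
      using eventually_ge_at_top[of "4::real"] by eventually_elim (rule nonneg)
    show "\<forall>\<^sub>F r in at_top. r ^ 3 * Mpp p r f * exp (- \<alpha> * r ^ 2) \<le> C * Tr (r - 2)"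
      using eventually_ge_at_top[of "4::real"] by eventually_elim (rule bound)
  qed
qed


end
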